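(* Let $K$ be a field of characteristic different from $2$ and $3$. Let $A=H_3(C,\Gamma)$ be a reduced Albert algebra over $K$, where $C$ is an octonion algebra over $K$ and $\Gamma=(\gamma_1,\gamma_2,\gamma_3)\in(K^\times)^3$. Let $L_1\subset A$ be the subalgebra of diagonal matrices and let $L_2\subset A$ be an arbitrary split cubic étale subalgebra (i.e. a subalgebra isomorphic to $K\times K\times K$). Then there exists $g\in\mathrm{Str}(A)=\mathbf{Str}(A)(K)$ with $g(L_1)=L_2$.
   Context: $H_3(C,\Gamma)$ is the set of $3\times 3$ matrices of the form $\begin{pmatrix}\xi_1 & c_3 & \gamma_1^{-1}\gamma_3\overline{c_2}\\ \gamma_2^{-1}\gamma_1\overline{c_3} & \xi_2 & c_1\\ c_2 & \gamma_3^{-1}\gamma_2\overline{c_1} & \xi_3\end{pmatrix}$ with $\xi_i\in K$, $c_i\in C$, $\overline{\phantom{c}}$ the canonical involution of $C$; it is an Albert algebra under the symmetrized matrix product $\frac12(xy+yx)$, with cubic norm $N$. The structure group $\mathbf{Str}(A)$ is the group scheme of norm similarities: $\mathbf{Str}(A)(R)=\{x\in\mathbf{GL}(A)(R): N_R(x(a))=\nu(x)N_R(a)\ \forall a\in A\otimes_KR\}$, $\nu(x)\in R^\times$. *)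

theory Defs
  imports Main
begin

text \<open>A (not necessarily associative) unital K-algebra on a carrier type 'c
  (addition from the type class), together with a quadratic norm form.\<close>
record ('k, 'c) kalg =
  csmul :: "'k \<Rightarrow> 'c \<Rightarrow> 'c"
  cmul  :: "'c \<Rightarrow> 'c \<Rightarrow> 'c"
  cone  :: "'c"
  cnorm :: "'c \<Rightarrow> 'k"

definition polar :: "('k::field, 'c::ab_group_add) kalg \<Rightarrow> 'c \<Rightarrow> 'c \<Rightarrow> 'k" where
  "polar C x y = cnorm C (x + y) - cnorm C x - cnorm C y"

text \<open>Octonion algebra = 8-dimensional unital composition algebra
  (nondegenerate multiplicative quadratic norm).\<close>
definition octonion_algebra :: "('k::field, 'c::ab_group_add) kalg \<Rightarrow> bool" where
  "octonion_algebra C \<longleftrightarrow>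
     (\<forall>a x y. csmul C a (x + y) = csmul C a x + csmul C a y) \<and>
     (\<forall>a b x. csmul C (a + b) x = csmul C a x + csmul C b x) \<and>
     (\<forall>a b x. csmul C a (csmul C b x) = csmul C (a * b) x) \<and>
     (\<forall>x. csmul C 1 x = x) \<and>
     (\<forall>x y z. cmul C (x + y) z = cmul C x z + cmul C y z) \<and>
     (\<forall>x y z. cmul C x (y + z) = cmul C x y + cmul C x z) \<and>
     (\<forall>a x y. cmul C (csmul C a x) y = csmul C a (cmul C x y)) \<and>
     (\<forall>a x y. cmul C x (csmul C a y) = csmul C a (cmul C x y)) \<and>
     (\<forall>x. cmul C (cone C) x = x \<and> cmul C x (cone C) = x) \<and>
     (\<forall>a x. cnorm C (csmul C a x) = a ^ 2 * cnorm C x) \<and>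
     (\<forall>x y z. polar C (x + y) z = polar C x z + polar C y z) \<and>
     (\<forall>a x y. polar C (csmul C a x) y = a * polar C x y) \<and>
     (\<forall>x. (\<forall>y. polar C x y = 0) \<longrightarrow> x = 0) \<and>
     (\<forall>x y. cnorm C (cmul C x y) = cnorm C x * cnorm C y) \<and>
     (\<exists>e :: nat \<Rightarrow> 'c. \<forall>x. \<exists>!a :: nat \<Rightarrow> 'k.
         (\<forall>i\<ge>8. a i = 0) \<and> x = (\<Sum>i<8. csmul C (a i) (e i)))"

definition ctrace :: "('k::field, 'c::ab_group_add) kalg \<Rightarrow> 'c \<Rightarrow> 'k" where
  "ctrace C x = polar C x (cone C)"

definition cconj :: "('k::field, 'c::ab_group_add) kalg \<Rightarrow> 'c \<Rightarrow> 'c" where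
  "cconj C x = csmul C (ctrace C x) (cone C) - x"

text \<open>An element is given by its coordinates (xi1, xi2, xi3, c1, c2, c3).\<close>
type_synonym ('k, 'c) alb = "'k \<times> 'k \<times> 'k \<times> 'c \<times> 'c \<times> 'c"

definition alb_add :: "('k::field, 'c::ab_group_add) alb \<Rightarrow> ('k, 'c) alb \<Rightarrow> ('k, 'c) alb" where
  "alb_add x y = (case x of (a1, a2, a3, c1, c2, c3) \<Rightarrow> case y of (b1, b2, b3, d1, d2, d3) \<Rightarrow>
     (a1 + b1, a2 + b2, a3 + b3, c1 + d1, c2 + d2, c3 + d3))"

definition alb_smul :: "('k::field, 'c::ab_group_add) kalg \<Rightarrow> 'k \<Rightarrow> ('k, 'c) alb \<Rightarrow> ('k, 'c) alb" where
  "alb_smul C s x = (case x of (a1, a2, a3, c1, c2, c3) \<Rightarrow>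
     (s * a1, s * a2, s * a3, csmul C s c1, csmul C s c2, csmul C s c3))"

definition alb_one :: "('k::field, 'c::ab_group_add) alb" where
  "alb_one = (1, 1, 1, 0, 0, 0)"

definition albmat :: "('k::field, 'c::ab_group_add) kalg \<Rightarrow> 'k \<times> 'k \<times> 'k \<Rightarrow> ('k, 'c) alb
    \<Rightarrow> nat \<Rightarrow> nat \<Rightarrow> 'c" where
  "albmat C \<Gamma> x i j = (case \<Gamma> of (g1, g2, g3) \<Rightarrow> case x of (a1, a2, a3, c1, c2, c3) \<Rightarrow>
     (if i = 0 \<and> j = 0 then csmul C a1 (cone C)
      else if i = 0 \<and> j = 1 then c3
      else if i = 0 \<and> j = 2 then csmul C (inverse g1 * g3) (cconj C c2)
      else if i = 1 \<and> j = 0 then csmul C (inverse g2 * g1) (cconj C c3)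
      else if i = 1 \<and> j = 1 then csmul C a2 (cone C)
      else if i = 1 \<and> j = 2 then c1
      else if i = 2 \<and> j = 0 then c2
      else if i = 2 \<and> j = 1 then csmul C (inverse g3 * g2) (cconj C c1)
      else if i = 2 \<and> j = 2 then csmul C a3 (cone C)
      else 0))"

definition jmat :: "('k::field, 'c::ab_group_add) kalg \<Rightarrow> (nat \<Rightarrow> nat \<Rightarrow> 'c) \<Rightarrow> (nat \<Rightarrow> nat \<Rightarrow> 'c)
    \<Rightarrow> nat \<Rightarrow> nat \<Rightarrow> 'c" where
  "jmat C X Y i j = csmul C (inverse 2)
     ((\<Sum>k<3. cmul C (X i k) (Y k j)) + (\<Sum>k<3. cmul C (Y i k) (X k j)))"

definition is_jprod :: "('k::field, 'c::ab_group_add) kalg \<Rightarrow> 'k \<times> 'k \<times> 'k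
    \<Rightarrow> ('k, 'c) alb \<Rightarrow> ('k, 'c) alb \<Rightarrow> ('k, 'c) alb \<Rightarrow> bool" where
  "is_jprod C \<Gamma> x y z \<longleftrightarrow>
     (\<forall>i<3. \<forall>j<3. albmat C \<Gamma> z i j = jmat C (albmat C \<Gamma> x) (albmat C \<Gamma> y) i j)"

text \<open>Cubic norm of H_3(C,Gamma) (determinant of the matrix; N(1) = 1).\<close>
definition alb_norm :: "('k::field, 'c::ab_group_add) kalg \<Rightarrow> 'k \<times> 'k \<times> 'k \<Rightarrow> ('k, 'c) alb \<Rightarrow> 'k" where
  "alb_norm C \<Gamma> x = (case \<Gamma> of (g1, g2, g3) \<Rightarrow> case x of (a1, a2, a3, c1, c2, c3) \<Rightarrow>
      a1 * a2 * a3
      - a1 * (inverse g3 * g2) * cnorm C c1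
      - a2 * (inverse g1 * g3) * cnorm C c2
      - a3 * (inverse g2 * g1) * cnorm C c3
      + ctrace C (cmul C c3 (cmul C c1 c2)))"

text \<open>Full polarization of the cubic norm (its values over K determine N as a
  polynomial law, since char K is not 2 or 3).\<close>
definition alb_norm3 :: "('k::field, 'c::ab_group_add) kalg \<Rightarrow> 'k \<times> 'k \<times> 'k
    \<Rightarrow> ('k, 'c) alb \<Rightarrow> ('k, 'c) alb \<Rightarrow> ('k, 'c) alb \<Rightarrow> 'k" where
  "alb_norm3 C \<Gamma> a b c =
     alb_norm C \<Gamma> (alb_add (alb_add a b) c)
     - alb_norm C \<Gamma> (alb_add a b) - alb_norm C \<Gamma> (alb_add a c) - alb_norm C \<Gamma> (alb_add b c)
     + alb_norm C \<Gamma> a + alb_norm C \<Gamma> b + alb_norm C \<Gamma> c"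

definition alb_linear :: "('k::field, 'c::ab_group_add) kalg \<Rightarrow> (('k, 'c) alb \<Rightarrow> ('k, 'c) alb) \<Rightarrow> bool" where
  "alb_linear C g \<longleftrightarrow> (\<forall>x y. g (alb_add x y) = alb_add (g x) (g y)) \<and>
                        (\<forall>s x. g (alb_smul C s x) = alb_smul C s (g x))"

text \<open>K-points of the structure group Str(A): K-linear bijections g with a
  multiplier nu in K^x such that N(g a) = nu N(a) as polynomial laws; the
  polynomial identity is expressed through the fully polarized norm.\<close>
definition in_Str :: "('k::field, 'c::ab_group_add) kalg \<Rightarrow> 'k \<times> 'k \<times> 'k
    \<Rightarrow> (('k, 'c) alb \<Rightarrow> ('k, 'c) alb) \<Rightarrow> bool" where
  "in_Str C \<Gamma> g \<longleftrightarrow> alb_linear C g \<and> bij g \<and>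
     (\<exists>\<nu>. \<nu> \<noteq> 0 \<and>
        (\<forall>a. alb_norm C \<Gamma> (g a) = \<nu> * alb_norm C \<Gamma> a) \<and>
        (\<forall>a b c. alb_norm3 C \<Gamma> (g a) (g b) (g c) = \<nu> * alb_norm3 C \<Gamma> a b c))"

definition diag_sub :: "('k::field, 'c::ab_group_add) alb set" where
  "diag_sub = {(a1, a2, a3, 0, 0, 0) | a1 a2 a3. True}"

definition split_cubic_etale_sub :: "('k::field, 'c::ab_group_add) kalg \<Rightarrow> 'k \<times> 'k \<times> 'k
    \<Rightarrow> ('k, 'c) alb set \<Rightarrow> bool" where
  "split_cubic_etale_sub C \<Gamma> L \<longleftrightarrow>
     alb_one \<in> L \<and>
     (\<forall>x\<in>L. \<forall>y\<in>L. alb_add x y \<in> L) \<and>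
     (\<forall>s. \<forall>x\<in>L. alb_smul C s x \<in> L) \<and>
     (\<forall>x\<in>L. \<forall>y\<in>L. \<exists>z\<in>L. is_jprod C \<Gamma> x y z) \<and>
     (\<exists>\<phi> :: 'k \<times> 'k \<times> 'k \<Rightarrow> ('k, 'c) alb.
        bij_betw \<phi> UNIV L \<and>
        (\<forall>a1 a2 a3 b1 b2 b3. \<phi> (a1 + b1, a2 + b2, a3 + b3) = alb_add (\<phi> (a1, a2, a3)) (\<phi> (b1, b2, b3))) \<and>
        (\<forall>s a1 a2 a3. \<phi> (s * a1, s * a2, s * a3) = alb_smul C s (\<phi> (a1, a2, a3))) \<and>
        (\<forall>a1 a2 a3 b1 b2 b3. is_jprod C \<Gamma> (\<phi> (a1, a2, a3)) (\<phi> (b1, b2, b3))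
                                 (\<phi> (a1 * b1, a2 * b2, a3 * b3))))"

end

theory Submission
  imports Defs HOL.Modules
begin


locale oct =
  fixes C :: "('k::field, 'c::ab_group_add) kalg"
  assumes oa: "octonion_algebra C" and two: "(2::'k) \<noteq> 0"
begin

abbreviation "sm \<equiv> csmul C"
abbreviation "mul \<equiv> cmul C"
abbreviation "one \<equiv> cone C"
abbreviation "nn \<equiv> cnorm C"
abbreviation "pl \<equiv> polar C"
abbreviation "tr \<equiv> ctrace C"
abbreviation "cj \<equiv> cconj C"

lemma oa_parts: "(\<forall>a x y. sm a (x + y) = sm a x + sm a y) \<and>
     (\<forall>a b x. sm (a + b) x = sm a x + sm b x) \<and>
     (\<forall>a b x. sm a (sm b x) = sm (a * b) x) \<and>
     (\<forall>x. sm 1 x = x) \<and>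
     (\<forall>x y z. mul (x + y) z = mul x z + mul y z) \<and>
     (\<forall>x y z. mul x (y + z) = mul x y + mul x z) \<and>
     (\<forall>a x y. mul (sm a x) y = sm a (mul x y)) \<and>
     (\<forall>a x y. mul x (sm a y) = sm a (mul x y)) \<and>
     (\<forall>x. mul one x = x \<and> mul x one = x) \<and>
     (\<forall>a x. nn (sm a x) = a ^ 2 * nn x) \<and>
     (\<forall>x y z. pl (x + y) z = pl x z + pl y z) \<and>
     (\<forall>a x y. pl (sm a x) y = a * pl x y) \<and>
     (\<forall>x. (\<forall>y. pl x y = 0) \<longrightarrow> x = 0) \<and>
     (\<forall>x y. nn (mul x y) = nn x * nn y)"
  using oa unfolding octonion_algebra_def by (elim conjE) (intro conjI; assumption)

lemma ax_sm_add: "sm a (x + y) = sm a x + sm a y"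
  using oa_parts by meson
lemma ax_add_sm: "sm (a + b) x = sm a x + sm b x"
  using oa_parts by meson
lemma ax_sm_sm: "sm a (sm b x) = sm (a * b) x"
  using oa_parts by meson
lemma ax_sm_one: "sm 1 x = x"
  using oa_parts by meson
lemma mul_add_left: "mul (x + y) z = mul x z + mul y z"
  using oa_parts by meson
lemma mul_add_right: "mul x (y + z) = mul x y + mul x z"
  using oa_parts by meson
lemma mul_sm_left: "mul (sm a x) y = sm a (mul x y)"
  using oa_parts by meson
lemma mul_sm_right: "mul x (sm a y) = sm a (mul x y)"
  using oa_parts by meson
lemma one_mul: "mul one x = x"
  using oa_parts by meson
lemma mul_one: "mul x one = x"
  using oa_parts by meson
lemma nn_sm: "nn (sm a x) = a ^ 2 * nn x"
  using oa_parts by meson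
lemma pl_add_left: "pl (x + y) z = pl x z + pl y z"
  using oa_parts by meson
lemma pl_sm_left: "pl (sm a x) y = a * pl x y"
  using oa_parts by meson
lemma nondeg: "(\<forall>y. pl x y = 0) \<Longrightarrow> x = 0"
  using oa_parts by meson
lemma nn_mul: "nn (mul x y) = nn x * nn y"
  using oa_parts by meson

lemma basis_ex: "\<exists>e :: nat \<Rightarrow> 'c. \<forall>x. \<exists>!a :: nat \<Rightarrow> 'k.
         (\<forall>i\<ge>8. a i = 0) \<and> x = (\<Sum>i<8. sm (a i) (e i))"
  using oa unfolding octonion_algebra_def by (elim conjE) assumption

sublocale cm: module sm
  by unfold_locales (auto simp: ax_sm_add ax_add_sm ax_sm_sm ax_sm_one)

lemma pl_sym: "pl x y = pl y x"
  unfolding polar_def by (simp add: add.commute)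

lemma pl_add_right: "pl x (y + z) = pl x y + pl x z"
  by (subst (1 2 3) pl_sym) (rule pl_add_left)
lemma pl_sm_right: "pl x (sm a y) = a * pl x y"
  by (subst (1 2) pl_sym) (rule pl_sm_left)

lemma addhom:
  fixes f :: "'a::ab_group_add \<Rightarrow> 'b::ab_group_add"
  assumes "\<And>x y. f (x + y) = f x + f y"
  shows "f 0 = 0" "f (- x) = - f x" "f (x - y) = f x - f y"
proof -
  interpret additive f by unfold_locales (rule assms)
  show "f 0 = 0" "f (- x) = - f x" "f (x - y) = f x - f y" by (rule zero minus diff)+
qed

lemma pl_zero_left[simp]: "pl 0 y = 0" by (rule addhom(1)[of "\<lambda>x. pl x y", OF pl_add_left])
lemma pl_zero_right[simp]: "pl x 0 = 0" by (rule addhom(1)[of "\<lambda>y. pl x y", OF pl_add_right])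
lemma pl_neg_left[simp]: "pl (-x) y = - pl x y" by (rule addhom(2)[of "\<lambda>x. pl x y", OF pl_add_left])
lemma pl_neg_right[simp]: "pl x (-y) = - pl x y" by (rule addhom(2)[of "\<lambda>y. pl x y", OF pl_add_right])
lemma pl_diff_left: "pl (x - z) y = pl x y - pl z y" by (rule addhom(3)[of "\<lambda>x. pl x y", OF pl_add_left])
lemma pl_diff_right: "pl x (y - z) = pl x y - pl x z" by (rule addhom(3)[of "\<lambda>y. pl x y", OF pl_add_right])
lemma mul_zero_left[simp]: "mul 0 y = 0" by (rule addhom(1)[of "\<lambda>x. mul x y", OF mul_add_left])
lemma mul_zero_right[simp]: "mul x 0 = 0" by (rule addhom(1)[of "\<lambda>y. mul x y", OF mul_add_right])
lemma mul_neg_left[simp]: "mul (-x) y = - mul x y" by (rule addhom(2)[of "\<lambda>x. mul x y", OF mul_add_left])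
lemma mul_neg_right[simp]: "mul x (-y) = - mul x y" by (rule addhom(2)[of "\<lambda>y. mul x y", OF mul_add_right])
lemma mul_diff_left: "mul (x - z) y = mul x y - mul z y" by (rule addhom(3)[of "\<lambda>x. mul x y", OF mul_add_left])
lemma mul_diff_right: "mul x (y - z) = mul x y - mul x z" by (rule addhom(3)[of "\<lambda>y. mul x y", OF mul_add_right])

lemma nn_zero[simp]: "nn 0 = 0"
  using nn_sm[of 0 0] by simp

lemma sm_two: "sm 2 x = x + x"
  using ax_add_sm[of 1 1 x] by (simp only: one_add_one ax_sm_one)

lemma nn_add: "nn (x + y) = nn x + nn y + pl x y"
  unfolding polar_def by simp

lemma pl_self: "pl x x = 2 * nn x"
proof -
  have "nn (x + x) = 4 * nn x" using nn_sm[of 2 x] by (simp add: sm_two)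
  then show ?thesis unfolding polar_def by simp
qed

lemma nn_neg[simp]: "nn (-x) = nn x"
  using nn_sm[of "-1" x] by simp

lemma nondeg': "x \<noteq> 0 \<Longrightarrow> \<exists>y. pl x y \<noteq> 0"
  using nondeg by blast

lemma eq_by_pl: "(\<And>z. pl x z = pl y z) \<Longrightarrow> x = y"
proof -
  assume h: "\<And>z. pl x z = pl y z"
  have "\<forall>z. pl (x - y) z = 0" using h by (simp add: pl_diff_left)
  then have "x - y = 0" by (rule nondeg)
  then show "x = y" by simp
qed

lemma one_ne_zero: "one \<noteq> 0"
proof
  assume h: "one = 0"
  have all0: "\<And>x::'c. x = 0"
  proof -
    fix x :: 'c
    have "x = mul x one" by (simp add: mul_one)
    then show "x = 0" using h by simp
  qed
  obtain e :: "nat \<Rightarrow> 'c" where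
    e: "\<forall>x. \<exists>!a :: nat \<Rightarrow> 'k. (\<forall>i\<ge>8. a i = 0) \<and> x = (\<Sum>i<8. sm (a i) (e i))"
    using basis_ex by blast
  then have u: "\<exists>!a :: nat \<Rightarrow> 'k. (\<forall>i\<ge>8. a i = 0) \<and> (0::'c) = (\<Sum>i<8. sm (a i) (e i))"
    by blast
  have t1: "(THE a. (\<forall>i\<ge>(8::nat). a i = 0) \<and> (0::'c) = (\<Sum>i<8. sm (a i) (e i))) = (\<lambda>i. 0)"
    by (rule the1_equality[OF u]) simp
  have t2: "(THE a. (\<forall>i\<ge>(8::nat). a i = 0) \<and> (0::'c) = (\<Sum>i<8. sm (a i) (e i))) = (\<lambda>i. if i = 0 then 1 else 0)"
    by (rule the1_equality[OF u]) (simp add: all0[of "\<Sum>i<8. sm (if i = 0 then 1 else 0) (e i)"])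
  have "(\<lambda>i::nat. 0::'k) = (\<lambda>i. if i = 0 then 1 else 0)" using t1 t2 by simp
  from fun_cong[OF this, of 0] show False by simp
qed

lemma nn_one: "nn one = 1"
proof -
  have e: "nn one = nn one * nn one" using nn_mul[of one one] by (simp add: one_mul)
  show ?thesis
  proof (rule ccontr)
    assume "nn one \<noteq> 1"
    then have z: "nn one = 0" using e by (metis mult_cancel_left1)
    have "\<And>x. nn x = 0" using nn_mul[of _ one] z by (simp add: mul_one)
    then have "\<forall>y. pl one y = 0" unfolding polar_def by simp
    then show False using nondeg one_ne_zero by blast
  qed
qed

lemma sm_eq_zero: "sm a x = 0 \<longleftrightarrow> a = 0 \<or> x = 0"
proof
  assume h: "sm a x = 0"
  show "a = 0 \<or> x = 0"
  proof (rule ccontr)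
    assume "\<not> (a = 0 \<or> x = 0)"
    then have "a \<noteq> 0" "x \<noteq> 0" by auto
    have "sm (inverse a) (sm a x) = x" using \<open>a \<noteq> 0\<close> by simp
    then show False using h \<open>x \<noteq> 0\<close> by simp
  qed
qed auto

lemma sm_one_inj: "sm a one = sm b one \<longleftrightarrow> a = b"
proof
  assume "sm a one = sm b one"
  then have "sm (a - b) one = 0" by (simp add: cm.scale_left_diff_distrib)
  then show "a = b" using one_ne_zero sm_eq_zero by auto
qed simp


lemma L1: "pl (mul x y) (mul x z) = nn x * pl y z"
proof -
  have "nn (mul x (y + z)) = nn x * nn (y + z)" by (rule nn_mul)
  then show ?thesis by (simp add: mul_add_right nn_add nn_mul algebra_simps)
qed

lemma R1: "pl (mul y x) (mul z x) = nn x * pl y z"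
proof -
  have "nn (mul (y + z) x) = nn (y + z) * nn x" by (rule nn_mul)
  then show ?thesis by (simp add: mul_add_left nn_add nn_mul algebra_simps)
qed

lemma L2: "pl (mul x y) (mul w z) + pl (mul w y) (mul x z) = pl x w * pl y z"
proof -
  have "pl (mul (x + w) y) (mul (x + w) z) = nn (x + w) * pl y z" by (rule L1)
  then show ?thesis using pl_sym[of w x]
    by (simp add: mul_add_left pl_add_left pl_add_right L1 nn_add algebra_simps)
qed

lemma R2: "pl (mul y x) (mul z w) + pl (mul y w) (mul z x) = pl x w * pl y z"
proof -
  have "pl (mul y (x + w)) (mul z (x + w)) = nn (x + w) * pl y z" by (rule R1)
  then show ?thesis using pl_sym[of w x]
    by (simp add: mul_add_right pl_add_left pl_add_right R1 nn_add algebra_simps)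
qed

lemma tr_def': "tr x = pl x one" by (simp add: ctrace_def)
lemma cj_def': "cj x = sm (tr x) one - x" by (simp add: cconj_def)

lemma tr_one: "tr one = 2" by (simp add: tr_def' pl_self nn_one)
lemma tr_add: "tr (x + y) = tr x + tr y" by (simp add: tr_def' pl_add_left)
lemma tr_sm: "tr (sm a x) = a * tr x" by (simp add: tr_def' pl_sm_left)
lemma tr_zero[simp]: "tr 0 = 0" by (simp add: tr_def')
lemma tr_neg[simp]: "tr (- x) = - tr x" by (simp add: tr_def')
lemma tr_diff: "tr (x - y) = tr x - tr y" by (simp add: tr_def' pl_diff_left)

lemma mul_sm_one_left: "mul (sm a one) x = sm a x" by (simp add: mul_sm_left one_mul)
lemma mul_sm_one_right: "mul x (sm a one) = sm a x" by (simp add: mul_sm_right mul_one)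

lemma pl_one_sm: "pl (sm a one) y = a * tr y" by (simp add: pl_sm_left tr_def' pl_sym[of one y])

lemma pl_mul_left: "pl (mul x y) z = pl y (mul (cj x) z)"
proof -
  have "pl (mul x y) (mul one z) + pl (mul one y) (mul x z) = pl x one * pl y z" by (rule L2)
  then have "pl (mul x y) z = tr x * pl y z - pl y (mul x z)"
    by (simp add: one_mul tr_def' algebra_simps)
  also have "\<dots> = pl y (mul (cj x) z)"
    by (simp add: cj_def' mul_diff_left mul_sm_one_left pl_diff_right pl_sm_right)
  finally show ?thesis .
qed

lemma pl_mul_right: "pl (mul y x) z = pl y (mul z (cj x))"
proof -
  have "pl (mul y x) (mul z one) + pl (mul y one) (mul z x) = pl x one * pl y z" by (rule R2)
  then have "pl (mul y x) z = tr x * pl y z - pl y (mul z x)"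
    by (simp add: mul_one tr_def' algebra_simps)
  also have "\<dots> = pl y (mul z (cj x))"
    by (simp add: cj_def' mul_diff_right mul_sm_one_right pl_diff_right pl_sm_right)
  finally show ?thesis .
qed

lemma tr_cj: "tr (cj x) = tr x"
  by (simp add: cj_def' tr_diff tr_sm tr_one)

lemma cj_cj[simp]: "cj (cj x) = x"
  by (simp only: cj_def'[of "cj x"] tr_cj) (simp add: cj_def')

lemma cj_add: "cj (x + y) = cj x + cj y"
  by (simp add: cj_def' tr_add cm.scale_left_distrib)
lemma cj_sm: "cj (sm a x) = sm a (cj x)"
  by (simp add: cj_def' tr_sm cm.scale_right_diff_distrib)
lemma cj_zero[simp]: "cj 0 = 0" by (simp add: cj_def')
lemma cj_neg: "cj (- x) = - cj x" by (simp add: cj_def')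
lemma cj_diff: "cj (x - y) = cj x - cj y"
  by (simp add: cj_def' tr_diff cm.scale_left_diff_distrib)
lemma cj_one: "cj one = one"
  by (simp add: cj_def' tr_one sm_two)

lemma nn_cj: "nn (cj x) = nn x"
proof -
  have "nn (cj x) = nn (sm (tr x) one + (- x))" by (simp add: cj_def')
  also have "\<dots> = nn x"
    by (simp only: nn_add nn_sm nn_one nn_neg pl_neg_right pl_one_sm) (simp add: power2_eq_square)
  finally show ?thesis .
qed

lemma cj_mul_mul: "mul (cj x) (mul x y) = sm (nn x) y"
proof (rule eq_by_pl)
  fix z
  have "pl (mul (cj x) (mul x y)) z = pl (mul x y) (mul x z)" using pl_mul_left[of "cj x" "mul x y" z] by simp
  then show "pl (mul (cj x) (mul x y)) z = pl (sm (nn x) y) z" by (simp add: L1 pl_sm_left)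
qed

lemma mul_mul_cj: "mul (mul y x) (cj x) = sm (nn x) y"
proof (rule eq_by_pl)
  fix z
  have "pl (mul (mul y x) (cj x)) z = pl (mul y x) (mul z x)" using pl_mul_right[of "mul y x" "cj x" z] by simp
  then show "pl (mul (mul y x) (cj x)) z = pl (sm (nn x) y) z" by (simp add: R1 pl_sm_left)
qed

lemma mul_cj_mul: "mul x (mul (cj x) y) = sm (nn x) y"
  using cj_mul_mul[of "cj x" y] by (simp add: nn_cj)

lemma mul_mul_cj': "mul (mul y (cj x)) x = sm (nn x) y"
  using mul_mul_cj[of y "cj x"] by (simp add: nn_cj)

lemma mul_cj_self: "mul x (cj x) = sm (nn x) one"
  using mul_cj_mul[of x one] by (simp add: mul_one)

lemma cj_mul_self: "mul (cj x) x = sm (nn x) one"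
  using cj_mul_mul[of x one] by (simp add: mul_one)

lemma add_cj: "x + cj x = sm (tr x) one" by (simp add: cj_def')

lemma pl_cj_left: "pl (cj x) y = tr x * tr y - pl x y"
  by (simp add: cj_def' pl_diff_left pl_one_sm)

lemma pl_cj_right: "pl x (cj y) = tr x * tr y - pl x y"
  using pl_cj_left[of y x] by (simp add: pl_sym[of _ x] mult.commute)

lemma tr_mul: "tr (mul x y) = pl (cj x) y"
  using pl_mul_left[of x y one] by (simp add: tr_def' mul_one pl_sym[of y "cj x"])

lemma tr_mul_comm: "tr (mul x y) = tr (mul y x)"
  by (simp add: tr_mul pl_cj_left pl_sym[of x y] mult.commute)

lemma sq_eq: "mul x x = sm (tr x) x - sm (nn x) one"
proof -
  have "mul x (cj x) = sm (nn x) one" by (rule mul_cj_self)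
  then show ?thesis
    by (simp add: cj_def' mul_diff_right mul_sm_one_right algebra_simps)
qed

lemma sq_lin: "mul x y + mul y x = sm (tr x) y + sm (tr y) x - sm (pl x y) one"
proof -
  have "mul (x + y) (x + y) = sm (tr (x + y)) (x + y) - sm (nn (x + y)) one" by (rule sq_eq)
  then have "mul x x + mul x y + mul y x + mul y y =
     sm (tr x) x + sm (tr x) y + sm (tr y) x + sm (tr y) y - sm (nn x) one - sm (nn y) one - sm (pl x y) one"
    by (simp add: mul_add_left mul_add_right tr_add nn_add cm.scale_left_distrib cm.scale_right_distrib algebra_simps)
  then show ?thesis by (simp add: sq_eq algebra_simps)
qed

lemma cj_mul: "cj (mul x y) = mul (cj y) (cj x)"
proof -
  have "mul (cj y) (cj x) = sm (tr x * tr y) one - sm (tr y) x - sm (tr x) y + mul y x"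
    by (simp add: cj_def' mul_diff_left mul_diff_right mul_sm_one_left mul_sm_one_right
        mul_sm_left mul_sm_right one_mul mul_one algebra_simps mult.commute)
  also have "\<dots> = sm (tr x * tr y - pl x y) one - mul x y"
    using sq_lin[of x y] by (simp add: cm.scale_left_diff_distrib algebra_simps)
  also have "\<dots> = cj (mul x y)"
    by (simp add: cj_def'[of "mul x y"] tr_mul pl_cj_left)
  finally show ?thesis by simp
qed

lemma tr_assoc: "tr (mul (mul x y) z) = tr (mul x (mul y z))"
proof -
  have "tr (mul (mul x y) z) = pl (cj (mul x y)) z" by (rule tr_mul)
  also have "\<dots> = pl (mul y z) (cj x)"
    using pl_mul_left[of y z "cj x"] by (simp add: cj_mul pl_sym[of z])
  also have "\<dots> = tr (mul x (mul y z))" by (simp add: tr_mul pl_sym)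
  finally show ?thesis .
qed

lemma tr_cyc: "tr (mul x (mul y z)) = tr (mul y (mul z x))"
  by (metis tr_assoc tr_mul_comm)

lemma pl_as_tr: "pl x y = tr (mul x (cj y))"
  by (simp add: tr_mul pl_cj_left pl_cj_right tr_cj algebra_simps)

lemma pl_cj_cj: "pl (cj x) (cj y) = pl x y"
  by (simp add: pl_cj_left pl_cj_right tr_cj)

end



context oct begin

definition Np :: "'k \<Rightarrow> 'k \<Rightarrow> 'k \<Rightarrow> ('k,'c) alb \<Rightarrow> 'k" where
  "Np p1 p2 p3 x = (case x of (a1,a2,a3,c1,c2,c3) \<Rightarrow>
     a1*a2*a3 - p1*a1*nn c1 - p2*a2*nn c2 - p3*a3*nn c3 + tr (mul c3 (mul c1 c2)))"

definition adj :: "'k \<Rightarrow> 'k \<Rightarrow> 'k \<Rightarrow> ('k,'c) alb \<Rightarrow> ('k,'c) alb" where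
  "adj p1 p2 p3 x = (case x of (a1,a2,a3,c1,c2,c3) \<Rightarrow>
     (a2*a3 - p1*nn c1, a1*a3 - p2*nn c2, a1*a2 - p3*nn c3,
      sm (p2*p3) (cj (mul c2 c3)) - sm a1 c1,
      sm (p1*p3) (cj (mul c3 c1)) - sm a2 c2,
      sm (p1*p2) (cj (mul c1 c2)) - sm a3 c3))"

definition Tf :: "'k \<Rightarrow> 'k \<Rightarrow> 'k \<Rightarrow> ('k,'c) alb \<Rightarrow> ('k,'c) alb \<Rightarrow> 'k" where
  "Tf p1 p2 p3 x y = (case x of (a1,a2,a3,c1,c2,c3) \<Rightarrow> case y of (b1,b2,b3,d1,d2,d3) \<Rightarrow>
     a1*b1 + a2*b2 + a3*b3 + p1 * pl c1 d1 + p2 * pl c2 d2 + p3 * pl c3 d3)"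

definition Qf :: "'k \<Rightarrow> 'k \<Rightarrow> 'k \<Rightarrow> ('k,'c) alb \<Rightarrow> ('k,'c) alb \<Rightarrow> 'k" where
  "Qf p1 p2 p3 x y = Tf p1 p2 p3 (adj p1 p2 p3 x) y"

lemma Np_simp: "Np p1 p2 p3 (a1,a2,a3,c1,c2,c3) =
     a1*a2*a3 - p1*a1*nn c1 - p2*a2*nn c2 - p3*a3*nn c3 + tr (mul c3 (mul c1 c2))"
  by (simp add: Np_def)

lemma adj_simp: "adj p1 p2 p3 (a1,a2,a3,c1,c2,c3) =
     (a2*a3 - p1*nn c1, a1*a3 - p2*nn c2, a1*a2 - p3*nn c3,
      sm (p2*p3) (cj (mul c2 c3)) - sm a1 c1,
      sm (p1*p3) (cj (mul c3 c1)) - sm a2 c2,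
      sm (p1*p2) (cj (mul c1 c2)) - sm a3 c3)"
  by (simp add: adj_def)

lemma Tf_simp: "Tf p1 p2 p3 (a1,a2,a3,c1,c2,c3) (b1,b2,b3,d1,d2,d3) =
     a1*b1 + a2*b2 + a3*b3 + p1 * pl c1 d1 + p2 * pl c2 d2 + p3 * pl c3 d3"
  by (simp add: Tf_def)

lemma alb_add_simp: "alb_add (a1,a2,a3,c1,c2,c3) (b1,b2,b3,d1,d2,d3) =
   (a1+b1, a2+b2, a3+b3, c1+d1, c2+d2, c3+d3)"
  by (simp add: alb_add_def)

lemma alb_smul_simp: "alb_smul C k (a1,a2,a3,c1,c2,c3) = (k*a1, k*a2, k*a3, sm k c1, sm k c2, sm k c3)"
  by (simp add: alb_smul_def)

lemma K1: "pl (cj (mul x y)) w = tr (mul y (mul w x))"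
proof -
  have "pl (cj (mul x y)) w = pl (mul x y) (cj w)" using pl_cj_cj[of "mul x y" "cj w"] by simp
  also have "\<dots> = tr (mul (mul x y) w)" by (simp add: pl_as_tr)
  also have "\<dots> = tr (mul y (mul w x))" using tr_assoc[of x y w] tr_cyc[of x y w] by simp
  finally show ?thesis .
qed

lemma Qf_simp: "Qf p1 p2 p3 (a1,a2,a3,c1,c2,c3) (b1,b2,b3,d1,d2,d3) =
   (a2*a3 - p1*nn c1)*b1 + (a1*a3 - p2*nn c2)*b2 + (a1*a2 - p3*nn c3)*b3
   + p1*(p2*p3*tr (mul c3 (mul d1 c2)) - a1 * pl c1 d1)
   + p2*(p1*p3*tr (mul c1 (mul d2 c3)) - a2 * pl c2 d2)
   + p3*(p1*p2*tr (mul c2 (mul d3 c1)) - a3 * pl c3 d3)"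
  by (simp add: Qf_def adj_simp Tf_simp pl_diff_left pl_sm_left K1)

lemma nn_add3: "nn (x + y) = nn x + nn y + pl x y" by (rule nn_add)

lemma Np_add:
  assumes p: "p1*p2*p3 = 1"
  shows "Np p1 p2 p3 (alb_add u y) = Np p1 p2 p3 u + Qf p1 p2 p3 u y + Qf p1 p2 p3 y u + Np p1 p2 p3 y"
proof -
  obtain a1 a2 a3 c1 c2 c3 where u: "u = (a1,a2,a3,c1,c2,c3)" by (cases u) auto
  obtain b1 b2 b3 d1 d2 d3 where y: "y = (b1,b2,b3,d1,d2,d3)" by (cases y) auto
  have t1: "tr (mul c1 (mul d2 c3)) = tr (mul c3 (mul c1 d2))" by (rule tr_cyc[symmetric])
  have t2: "tr (mul c2 (mul d3 c1)) = tr (mul d3 (mul c1 c2))" by (rule tr_cyc)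
  have t3: "tr (mul d1 (mul c2 d3)) = tr (mul d3 (mul d1 c2))" by (rule tr_cyc[symmetric])
  have t4: "tr (mul d2 (mul c3 d1)) = tr (mul c3 (mul d1 d2))" by (rule tr_cyc)
  have t5: "tr (mul d3 (mul c1 d2)) = tr (mul d3 (mul c1 d2))" by simp
  have s1: "pl d1 c1 = pl c1 d1" "pl d2 c2 = pl c2 d2" "pl d3 c3 = pl c3 d3" by (simp_all add: pl_sym)
  have p2': "p1*(p2*(p3*X)) = X" for X using p by (simp add: mult.assoc[symmetric])
  show ?thesis
    unfolding u y alb_add_simp Np_simp Qf_simp
    by (simp add: mul_add_left mul_add_right tr_add nn_add t1 t2 t3 t4 s1 algebra_simps p2')
qed


definition Mf :: "'k \<Rightarrow> 'k \<Rightarrow> 'k \<Rightarrow> ('k,'c) alb \<Rightarrow> ('k,'c) alb \<Rightarrow> ('k,'c) alb \<Rightarrow> 'k" where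
  "Mf p1 p2 p3 a b c =
     Np p1 p2 p3 (alb_add (alb_add a b) c)
     - Np p1 p2 p3 (alb_add a b) - Np p1 p2 p3 (alb_add a c) - Np p1 p2 p3 (alb_add b c)
     + Np p1 p2 p3 a + Np p1 p2 p3 b + Np p1 p2 p3 c"

definition rk1 :: "'k \<Rightarrow> 'k \<Rightarrow> 'k \<Rightarrow> ('k,'c) alb \<Rightarrow> bool" where
  "rk1 p1 p2 p3 u \<longleftrightarrow> (\<forall>y. Mf p1 p2 p3 u u y = 0)"

lemma Np_smul: "Np p1 p2 p3 (alb_smul C k u) = k^3 * Np p1 p2 p3 u"
proof -
  obtain a1 a2 a3 c1 c2 c3 where u: "u = (a1,a2,a3,c1,c2,c3)" by (cases u) auto
  show ?thesis unfolding u alb_smul_simp Np_simp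
    by (simp add: nn_sm mul_sm_left mul_sm_right tr_sm algebra_simps power2_eq_square power3_eq_cube)
qed

lemma adj_smul: "adj p1 p2 p3 (alb_smul C k u) = alb_smul C (k^2) (adj p1 p2 p3 u)"
proof -
  obtain a1 a2 a3 c1 c2 c3 where u: "u = (a1,a2,a3,c1,c2,c3)" by (cases u) auto
  show ?thesis unfolding u alb_smul_simp adj_simp
    by (simp add: nn_sm mul_sm_left mul_sm_right cj_sm cm.scale_right_diff_distrib algebra_simps power2_eq_square)
qed

lemma Tf_smul_left: "Tf p1 p2 p3 (alb_smul C k u) y = k * Tf p1 p2 p3 u y"
proof -
  obtain a1 a2 a3 c1 c2 c3 where u: "u = (a1,a2,a3,c1,c2,c3)" by (cases u) auto
  obtain b1 b2 b3 d1 d2 d3 where y: "y = (b1,b2,b3,d1,d2,d3)" by (cases y) auto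
  show ?thesis unfolding u y alb_smul_simp Tf_simp by (simp add: pl_sm_left algebra_simps)
qed

lemma Tf_smul_right: "Tf p1 p2 p3 u (alb_smul C k y) = k * Tf p1 p2 p3 u y"
proof -
  obtain a1 a2 a3 c1 c2 c3 where u: "u = (a1,a2,a3,c1,c2,c3)" by (cases u) auto
  obtain b1 b2 b3 d1 d2 d3 where y: "y = (b1,b2,b3,d1,d2,d3)" by (cases y) auto
  show ?thesis unfolding u y alb_smul_simp Tf_simp by (simp add: pl_sm_right algebra_simps)
qed

lemma Qf_smul_left: "Qf p1 p2 p3 (alb_smul C k u) y = k^2 * Qf p1 p2 p3 u y"
  by (simp add: Qf_def adj_smul Tf_smul_left)

lemma Qf_smul_right: "Qf p1 p2 p3 u (alb_smul C k y) = k * Qf p1 p2 p3 u y"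
  by (simp add: Qf_def Tf_smul_right)

lemma alb_add_self: "alb_add u u = alb_smul C 2 u"
proof -
  obtain a1 a2 a3 c1 c2 c3 where u: "u = (a1,a2,a3,c1,c2,c3)" by (cases u) auto
  show ?thesis unfolding u alb_smul_simp alb_add_simp by (simp add: sm_two)
qed

lemma Mf_uuy:
  assumes p: "p1*p2*p3 = 1"
  shows "Mf p1 p2 p3 u u y = 2 * Qf p1 p2 p3 u y"
  unfolding Mf_def alb_add_self Np_add[OF p] Np_smul Qf_smul_left Qf_smul_right
  by (simp add: algebra_simps power2_eq_square power3_eq_cube)

lemma Qf_self:
  assumes p: "p1*p2*p3 = 1"
  shows "Qf p1 p2 p3 u u = 3 * Np p1 p2 p3 u"
proof -
  have "Np p1 p2 p3 (alb_add u u) = 8 * Np p1 p2 p3 u"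
    unfolding alb_add_self Np_smul by simp
  then have "2 * Qf p1 p2 p3 u u = 6 * Np p1 p2 p3 u"
    unfolding Np_add[OF p] by (simp add: algebra_simps)
  then have "2 * Qf p1 p2 p3 u u = 2 * (3 * Np p1 p2 p3 u)" by simp
  then show ?thesis using two mult_left_cancel[of "2::'k"] by blast
qed

definition zalb :: "('k,'c) alb" where "zalb = (0,0,0,0,0,0)"

lemma adj_zero_Qf:
  assumes "adj p1 p2 p3 u = zalb"
  shows "Qf p1 p2 p3 u y = 0"
proof -
  obtain b1 b2 b3 d1 d2 d3 where y: "y = (b1,b2,b3,d1,d2,d3)" by (cases y) auto
  show ?thesis using assms unfolding Qf_def zalb_def y by (simp add: Tf_simp)
qed

lemma rk1_iff:
  assumes p: "p1*p2*p3 = 1"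
  shows "rk1 p1 p2 p3 u \<longleftrightarrow> adj p1 p2 p3 u = zalb"
proof
  assume "adj p1 p2 p3 u = zalb"
  then show "rk1 p1 p2 p3 u" unfolding rk1_def Mf_uuy[OF p] using adj_zero_Qf by simp
next
  assume r: "rk1 p1 p2 p3 u"
  have q: "Qf p1 p2 p3 u y = 0" for y
  proof -
    have "Mf p1 p2 p3 u u y = 0" using r unfolding rk1_def by blast
    then show ?thesis using two unfolding Mf_uuy[OF p] by simp
  qed
  obtain A1 A2 A3 C1 C2 C3 where a: "adj p1 p2 p3 u = (A1,A2,A3,C1,C2,C3)" by (cases "adj p1 p2 p3 u") auto
  have pz: "p1 \<noteq> 0" "p2 \<noteq> 0" "p3 \<noteq> 0" using p by auto
  have "A1 = 0" using q[of "(1,0,0,0,0,0)"] unfolding Qf_def a by (simp add: Tf_simp)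
  moreover have "A2 = 0" using q[of "(0,1,0,0,0,0)"] unfolding Qf_def a by (simp add: Tf_simp)
  moreover have "A3 = 0" using q[of "(0,0,1,0,0,0)"] unfolding Qf_def a by (simp add: Tf_simp)
  moreover have "C1 = 0"
  proof (rule nondeg, rule allI)
    fix w show "pl C1 w = 0" using q[of "(0,0,0,w,0,0)"] pz unfolding Qf_def a by (simp add: Tf_simp)
  qed
  moreover have "C2 = 0"
  proof (rule nondeg, rule allI)
    fix w show "pl C2 w = 0" using q[of "(0,0,0,0,w,0)"] pz unfolding Qf_def a by (simp add: Tf_simp)
  qed
  moreover have "C3 = 0"
  proof (rule nondeg, rule allI)
    fix w show "pl C3 w = 0" using q[of "(0,0,0,0,0,w)"] pz unfolding Qf_def a by (simp add: Tf_simp)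
  qed
  ultimately show "adj p1 p2 p3 u = zalb" using a by (simp add: zalb_def)
qed


definition rot :: "('k,'c) alb \<Rightarrow> ('k,'c) alb" where
  "rot x = (case x of (a1,a2,a3,c1,c2,c3) \<Rightarrow> (a2,a3,a1,c2,c3,c1))"
definition rotinv :: "('k,'c) alb \<Rightarrow> ('k,'c) alb" where
  "rotinv x = (case x of (a1,a2,a3,c1,c2,c3) \<Rightarrow> (a3,a1,a2,c3,c1,c2))"

lemma rot_simp: "rot (a1,a2,a3,c1,c2,c3) = (a2,a3,a1,c2,c3,c1)" by (simp add: rot_def)
lemma rotinv_simp: "rotinv (a1,a2,a3,c1,c2,c3) = (a3,a1,a2,c3,c1,c2)" by (simp add: rotinv_def)
lemma rot_rotinv[simp]: "rot (rotinv x) = x" by (cases x) (simp add: rot_def rotinv_def)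
lemma rotinv_rot[simp]: "rotinv (rot x) = x" by (cases x) (simp add: rot_def rotinv_def)

lemma Np_rot: "Np p1 p2 p3 x = Np p2 p3 p1 (rot x)"
proof -
  obtain a1 a2 a3 c1 c2 c3 where u: "x = (a1,a2,a3,c1,c2,c3)" by (cases x) auto
  have "tr (mul c3 (mul c1 c2)) = tr (mul c1 (mul c2 c3))" by (rule tr_cyc)
  then show ?thesis unfolding u rot_simp Np_simp by (simp add: algebra_simps)
qed

lemma Np_rotinv: "Np p1 p2 p3 (rotinv y) = Np p2 p3 p1 y"
  using Np_rot[of p1 p2 p3 "rotinv y"] by simp

definition strp :: "'k \<Rightarrow> 'k \<Rightarrow> 'k \<Rightarrow> (('k,'c) alb \<Rightarrow> ('k,'c) alb) \<Rightarrow> bool" where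
  "strp p1 p2 p3 h \<longleftrightarrow> alb_linear C h \<and> bij h \<and>
     (\<exists>\<nu>. \<nu> \<noteq> 0 \<and> (\<forall>a. Np p1 p2 p3 (h a) = \<nu> * Np p1 p2 p3 a))"

lemma rot_linear: "alb_linear C rot"
  unfolding alb_linear_def
proof (intro conjI allI)
  fix x y
  show "rot (alb_add x y) = alb_add (rot x) (rot y)"
    by (cases x, cases y) (simp add: rot_simp alb_add_simp)
next
  fix s x
  show "rot (alb_smul C s x) = alb_smul C s (rot x)"
    by (cases x) (simp add: rot_simp alb_smul_simp)
qed

lemma rotinv_linear: "alb_linear C rotinv"
  unfolding alb_linear_def
proof (intro conjI allI)
  fix x y
  show "rotinv (alb_add x y) = alb_add (rotinv x) (rotinv y)"
    by (cases x, cases y) (simp add: rotinv_simp alb_add_simp)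
next
  fix s x
  show "rotinv (alb_smul C s x) = alb_smul C s (rotinv x)"
    by (cases x) (simp add: rotinv_simp alb_smul_simp)
qed

lemma linear_comp: "alb_linear C f \<Longrightarrow> alb_linear C g \<Longrightarrow> alb_linear C (f \<circ> g)"
  unfolding alb_linear_def comp_def by (simp del: split_paired_All)

lemma bij_rot: "bij rot" by (rule o_bij[of rotinv]) (auto simp: fun_eq_iff)
lemma bij_rotinv: "bij rotinv" by (rule o_bij[of rot]) (auto simp: fun_eq_iff)

lemma strp_comp: "strp p1 p2 p3 f \<Longrightarrow> strp p1 p2 p3 g \<Longrightarrow> strp p1 p2 p3 (f \<circ> g)"
  unfolding strp_def
proof (elim conjE exE, intro conjI)
  fix \<nu> \<mu>
  assume "alb_linear C f" "alb_linear C g" "bij f" "bij g" "\<nu> \<noteq> 0" "\<mu> \<noteq> 0"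
    and f: "\<forall>a. Np p1 p2 p3 (f a) = \<nu> * Np p1 p2 p3 a" and g: "\<forall>a. Np p1 p2 p3 (g a) = \<mu> * Np p1 p2 p3 a"
  show "alb_linear C (f \<circ> g)" by (rule linear_comp) fact+
  show "bij (f \<circ> g)" by (rule bij_comp) fact+
  show "\<exists>\<nu>. \<nu> \<noteq> 0 \<and> (\<forall>a. Np p1 p2 p3 ((f \<circ> g) a) = \<nu> * Np p1 p2 p3 a)"
    using f g \<open>\<nu> \<noteq> 0\<close> \<open>\<mu> \<noteq> 0\<close> by (intro exI[of _ "\<nu> * \<mu>"]) (simp del: split_paired_All)
qed

lemma strp_id: "strp p1 p2 p3 id"
  unfolding strp_def alb_linear_def by (intro conjI exI[of _ 1]) (simp_all del: split_paired_All)

lemma strp_rot: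
  assumes "strp p2 p3 p1 h" shows "strp p1 p2 p3 (rotinv \<circ> h \<circ> rot)"
  using assms unfolding strp_def
proof (elim conjE exE, intro conjI)
  fix \<nu> assume "alb_linear C h" "bij h" "\<nu> \<noteq> 0" and n: "\<forall>a. Np p2 p3 p1 (h a) = \<nu> * Np p2 p3 p1 a"
  show "alb_linear C (rotinv \<circ> h \<circ> rot)"
    by (intro linear_comp rot_linear rotinv_linear) fact
  show "bij (rotinv \<circ> h \<circ> rot)" by (intro bij_comp bij_rot bij_rotinv) fact
  show "\<exists>\<nu>. \<nu> \<noteq> 0 \<and> (\<forall>a. Np p1 p2 p3 ((rotinv \<circ> h \<circ> rot) a) = \<nu> * Np p1 p2 p3 a)"
    using n \<open>\<nu> \<noteq> 0\<close> by (intro exI[of _ \<nu>]) (simp add: Np_rotinv Np_rot[of p1 p2 p3] del: split_paired_All)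
qed

definition E01 :: "'k \<Rightarrow> 'k \<Rightarrow> 'k \<Rightarrow> 'c \<Rightarrow> ('k,'c) alb \<Rightarrow> ('k,'c) alb" where
  "E01 p1 p2 p3 s x = (case x of (a1,a2,a3,c1,c2,c3) \<Rightarrow>
     (a1 + p3 * pl s c3 + p3 * a2 * nn s, a2, a3, c1,
      c2 + sm (p1*p3) (mul (cj c1) (cj s)), c3 + sm a2 s))"

definition E02 :: "'k \<Rightarrow> 'k \<Rightarrow> 'k \<Rightarrow> 'c \<Rightarrow> ('k,'c) alb \<Rightarrow> ('k,'c) alb" where
  "E02 p1 p2 p3 s x = (case x of (a1,a2,a3,c1,c2,c3) \<Rightarrow>
     (a1 + tr (mul s c2) + p1 * p3 * a3 * nn s, a2, a3, c1,
      c2 + sm (p1*p3*a3) (cj s), c3 + sm p1 (mul s (cj c1))))"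

lemma E01_simp: "E01 p1 p2 p3 s (a1,a2,a3,c1,c2,c3) =
     (a1 + p3 * pl s c3 + p3 * a2 * nn s, a2, a3, c1,
      c2 + sm (p1*p3) (mul (cj c1) (cj s)), c3 + sm a2 s)" by (simp add: E01_def)
lemma E02_simp: "E02 p1 p2 p3 s (a1,a2,a3,c1,c2,c3) =
     (a1 + tr (mul s c2) + p1 * p3 * a3 * nn s, a2, a3, c1,
      c2 + sm (p1*p3*a3) (cj s), c3 + sm p1 (mul s (cj c1)))" by (simp add: E02_def)

lemma tr_s_cjs: "tr (mul s (cj s)) = 2 * nn s"
  by (simp add: mul_cj_self tr_sm tr_one)

lemma E01_norm:
  assumes p: "p1*p2*p3 = 1"
  shows "Np p1 p2 p3 (E01 p1 p2 p3 s x) = Np p1 p2 p3 x"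
proof -
  obtain a1 a2 a3 c1 c2 c3 where u: "x = (a1,a2,a3,c1,c2,c3)" by (cases x) auto
  have h1: "mul c1 (mul (cj c1) (cj s)) = sm (nn c1) (cj s)" by (rule mul_cj_mul)
  have h2: "tr (mul c3 (cj s)) = pl c3 s" by (simp add: pl_as_tr)
  have h2': "tr (mul s (cj s)) = 2 * nn s" by (rule tr_s_cjs)
  have h4: "pl c2 (mul (cj c1) (cj s)) = tr (mul s (mul c1 c2))"
  proof -
    have "pl c2 (mul (cj c1) (cj s)) = pl c2 (cj (mul s c1))" by (simp add: cj_mul)
    also have "\<dots> = tr (mul c2 (mul s c1))" by (simp add: pl_as_tr)
    also have "\<dots> = tr (mul s (mul c1 c2))" by (rule tr_cyc)
    finally show ?thesis .
  qed
  have h5: "nn (mul (cj c1) (cj s)) = nn c1 * nn s" by (simp add: nn_mul nn_cj)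
  have h6: "pl s c3 = pl c3 s" by (rule pl_sym)
  show ?thesis unfolding u E01_simp Np_simp
    apply (simp add: mul_add_left mul_add_right mul_sm_left mul_sm_right tr_add tr_sm nn_add nn_sm
        pl_add_left pl_add_right pl_sm_left pl_sm_right h1 h2 h2' h4 h5 h6 power2_eq_square)
    using p by algebra
qed


lemma E02_norm:
  assumes p: "p1*p2*p3 = 1"
  shows "Np p1 p2 p3 (E02 p1 p2 p3 s x) = Np p1 p2 p3 x"
proof -
  obtain a1 a2 a3 c1 c2 c3 where u: "x = (a1,a2,a3,c1,c2,c3)" by (cases x) auto
  have h1: "tr (mul (mul s (cj c1)) (mul c1 c2)) = nn c1 * tr (mul s c2)"
    by (simp add: tr_assoc[symmetric] mul_mul_cj' mul_sm_left tr_sm)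
  have h2: "tr (mul (mul s (cj c1)) (mul c1 (cj s))) = 2 * nn c1 * nn s"
    by (simp add: tr_assoc[symmetric] mul_mul_cj' mul_sm_left tr_sm tr_s_cjs)
  have h3: "pl c3 (mul s (cj c1)) = tr (mul c3 (mul c1 (cj s)))"
    by (simp add: pl_as_tr cj_mul)
  have h4: "pl c2 (cj s) = tr (mul s c2)"
    by (simp add: pl_as_tr tr_mul_comm)
  have h5: "nn (mul s (cj c1)) = nn s * nn c1" by (simp add: nn_mul nn_cj)
  show ?thesis unfolding u E02_simp Np_simp
    apply (simp add: mul_add_left mul_add_right mul_sm_left mul_sm_right tr_add tr_sm nn_add nn_sm nn_cj
        pl_add_left pl_add_right pl_sm_left pl_sm_right h1 h2 h3 h4 h5 power2_eq_square)
    using p by algebra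
qed

lemma E01_linear: "alb_linear C (E01 p1 p2 p3 s)"
  unfolding alb_linear_def
proof (intro conjI allI)
  fix x y
  show "E01 p1 p2 p3 s (alb_add x y) = alb_add (E01 p1 p2 p3 s x) (E01 p1 p2 p3 s y)"
    by (cases x, cases y) (simp add: E01_simp alb_add_simp pl_add_right cj_add mul_add_left
        cm.scale_left_distrib cm.scale_right_distrib algebra_simps)
next
  fix k x
  show "E01 p1 p2 p3 s (alb_smul C k x) = alb_smul C k (E01 p1 p2 p3 s x)"
    by (cases x) (simp add: E01_simp alb_smul_simp pl_sm_right cj_sm mul_sm_left
        cm.scale_right_distrib algebra_simps)
qed

lemma E02_linear: "alb_linear C (E02 p1 p2 p3 s)"
  unfolding alb_linear_def
proof (intro conjI allI)
  fix x y
  show "E02 p1 p2 p3 s (alb_add x y) = alb_add (E02 p1 p2 p3 s x) (E02 p1 p2 p3 s y)"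
    by (cases x, cases y) (simp add: E02_simp alb_add_simp tr_add mul_add_right cj_add mul_add_left
        cm.scale_left_distrib cm.scale_right_distrib algebra_simps)
next
  fix k x
  show "E02 p1 p2 p3 s (alb_smul C k x) = alb_smul C k (E02 p1 p2 p3 s x)"
    by (cases x) (simp add: E02_simp alb_smul_simp tr_sm cj_sm mul_sm_left mul_sm_right
        cm.scale_right_distrib algebra_simps)
qed

lemma E01_inv: "E01 p1 p2 p3 (-s) (E01 p1 p2 p3 s x) = x"
  by (cases x) (simp add: E01_simp cj_neg pl_add_right pl_sm_right pl_self algebra_simps)

lemma E02_inv: "E02 p1 p2 p3 (-s) (E02 p1 p2 p3 s x) = x"
  by (cases x) (simp add: E02_simp cj_neg mul_add_right mul_sm_right tr_add tr_diff tr_sm tr_s_cjs algebra_simps)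

lemma E01_bij: "bij (E01 p1 p2 p3 s)"
proof (rule o_bij[of "E01 p1 p2 p3 (-s)"])
  show "E01 p1 p2 p3 (-s) \<circ> E01 p1 p2 p3 s = id" by (rule ext) (simp add: E01_inv)
  show "E01 p1 p2 p3 s \<circ> E01 p1 p2 p3 (-s) = id"
    by (rule ext) (use E01_inv[of p1 p2 p3 "-s"] in simp)
qed

lemma E02_bij: "bij (E02 p1 p2 p3 s)"
proof (rule o_bij[of "E02 p1 p2 p3 (-s)"])
  show "E02 p1 p2 p3 (-s) \<circ> E02 p1 p2 p3 s = id" by (rule ext) (simp add: E02_inv)
  show "E02 p1 p2 p3 s \<circ> E02 p1 p2 p3 (-s) = id"
    by (rule ext) (use E02_inv[of p1 p2 p3 "-s"] in simp)
qed

lemma E01_strp: "p1*p2*p3 = 1 \<Longrightarrow> strp p1 p2 p3 (E01 p1 p2 p3 s)"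
  unfolding strp_def by (intro conjI exI[of _ 1]) (simp_all add: E01_linear E01_bij E01_norm del: split_paired_All)

lemma E02_strp: "p1*p2*p3 = 1 \<Longrightarrow> strp p1 p2 p3 (E02 p1 p2 p3 s)"
  unfolding strp_def by (intro conjI exI[of _ 1]) (simp_all add: E02_linear E02_bij E02_norm del: split_paired_All)

definition "E12 p1 p2 p3 s = rotinv \<circ> E01 p2 p3 p1 s \<circ> rot"
definition "E20 p1 p2 p3 s = rotinv \<circ> E12 p2 p3 p1 s \<circ> rot"
definition "E10 p1 p2 p3 s = rotinv \<circ> E02 p2 p3 p1 s \<circ> rot"
definition "E21 p1 p2 p3 s = rotinv \<circ> E10 p2 p3 p1 s \<circ> rot"

lemma p_rot: "p1*p2*p3 = 1 \<Longrightarrow> p2*p3*p1 = (1::'k)" by (simp add: ac_simps)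

lemma E12_strp: "p1*p2*p3 = 1 \<Longrightarrow> strp p1 p2 p3 (E12 p1 p2 p3 s)"
  unfolding E12_def by (rule strp_rot, rule E01_strp, erule p_rot)
lemma E20_strp: "p1*p2*p3 = 1 \<Longrightarrow> strp p1 p2 p3 (E20 p1 p2 p3 s)"
  unfolding E20_def by (rule strp_rot, rule E12_strp, erule p_rot)
lemma E10_strp: "p1*p2*p3 = 1 \<Longrightarrow> strp p1 p2 p3 (E10 p1 p2 p3 s)"
  unfolding E10_def by (rule strp_rot, rule E02_strp, erule p_rot)
lemma E21_strp: "p1*p2*p3 = 1 \<Longrightarrow> strp p1 p2 p3 (E21 p1 p2 p3 s)"
  unfolding E21_def by (rule strp_rot, rule E10_strp, erule p_rot)

lemma E12_simp: "E12 p1 p2 p3 s (a1,a2,a3,c1,c2,c3) =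
   (a1, a2 + p1 * pl s c1 + p1 * a3 * nn s, a3, c1 + sm a3 s, c2, c3 + sm (p2*p1) (mul (cj c2) (cj s)))"
  by (simp add: E12_def rot_simp rotinv_simp E01_simp)
lemma E20_simp: "E20 p1 p2 p3 s (a1,a2,a3,c1,c2,c3) =
   (a1, a2, a3 + p2 * pl s c2 + p2 * a1 * nn s, c1 + sm (p3*p2) (mul (cj c3) (cj s)), c2 + sm a1 s, c3)"
  by (simp add: E20_def E12_def rot_simp rotinv_simp E01_simp)
lemma E10_simp: "E10 p1 p2 p3 s (a1,a2,a3,c1,c2,c3) =
   (a1, a2 + tr (mul s c3) + p2 * p1 * a1 * nn s, a3, c1 + sm p2 (mul s (cj c2)), c2, c3 + sm (p2*p1*a1) (cj s))"
  by (simp add: E10_def rot_simp rotinv_simp E02_simp)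
lemma E21_simp: "E21 p1 p2 p3 s (a1,a2,a3,c1,c2,c3) =
   (a1, a2, a3 + tr (mul s c1) + p3 * p2 * a2 * nn s, c1 + sm (p3*p2*a2) (cj s), c2 + sm p3 (mul s (cj c3)), c3)"
  by (simp add: E21_def E10_def rot_simp rotinv_simp E02_simp)


definition jp :: "'k \<Rightarrow> 'k \<Rightarrow> 'k \<Rightarrow> ('k,'c) alb \<Rightarrow> ('k,'c) alb \<Rightarrow> ('k,'c) alb" where
  "jp p1 p2 p3 x y = (case x of (a1,a2,a3,c1,c2,c3) \<Rightarrow> case y of (b1,b2,b3,d1,d2,d3) \<Rightarrow>
    (a1*b1 + inverse 2 * (p3 * pl c3 d3 + p2 * pl c2 d2),
     a2*b2 + inverse 2 * (p3 * pl c3 d3 + p1 * pl c1 d1),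
     a3*b3 + inverse 2 * (p2 * pl c2 d2 + p1 * pl c1 d1),
     sm (inverse 2) (sm (a2+a3) d1 + sm (b2+b3) c1 + sm (p2*p3) (mul (cj c3) (cj d2) + mul (cj d3) (cj c2))),
     sm (inverse 2) (sm (a1+a3) d2 + sm (b1+b3) c2 + sm (p1*p3) (mul (cj c1) (cj d3) + mul (cj d1) (cj c3))),
     sm (inverse 2) (sm (a1+a2) d3 + sm (b1+b2) c3 + sm (p1*p2) (mul (cj c2) (cj d1) + mul (cj d2) (cj c1)))))"

lemma jp_simp: "jp p1 p2 p3 (a1,a2,a3,c1,c2,c3) (b1,b2,b3,d1,d2,d3) =
    (a1*b1 + inverse 2 * (p3 * pl c3 d3 + p2 * pl c2 d2),
     a2*b2 + inverse 2 * (p3 * pl c3 d3 + p1 * pl c1 d1),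
     a3*b3 + inverse 2 * (p2 * pl c2 d2 + p1 * pl c1 d1),
     sm (inverse 2) (sm (a2+a3) d1 + sm (b2+b3) c1 + sm (p2*p3) (mul (cj c3) (cj d2) + mul (cj d3) (cj c2))),
     sm (inverse 2) (sm (a1+a3) d2 + sm (b1+b3) c2 + sm (p1*p3) (mul (cj c1) (cj d3) + mul (cj d1) (cj c3))),
     sm (inverse 2) (sm (a1+a2) d3 + sm (b1+b2) c3 + sm (p1*p2) (mul (cj c2) (cj d1) + mul (cj d2) (cj c1))))"
  by (simp add: jp_def)

lemma sum3: "(\<Sum>k<(3::nat). f k) = f 0 + f 1 + (f 2 :: 'x::comm_monoid_add)"
  by (simp add: eval_nat_numeral lessThan_Suc add_ac)

lemma albmat_simps:
  "albmat C (g1,g2,g3) (a1,a2,a3,c1,c2,c3) 0 0 = sm a1 one"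
  "albmat C (g1,g2,g3) (a1,a2,a3,c1,c2,c3) 0 1 = c3"
  "albmat C (g1,g2,g3) (a1,a2,a3,c1,c2,c3) 0 2 = sm (inverse g1 * g3) (cj c2)"
  "albmat C (g1,g2,g3) (a1,a2,a3,c1,c2,c3) 1 0 = sm (inverse g2 * g1) (cj c3)"
  "albmat C (g1,g2,g3) (a1,a2,a3,c1,c2,c3) 1 1 = sm a2 one"
  "albmat C (g1,g2,g3) (a1,a2,a3,c1,c2,c3) 1 2 = c1"
  "albmat C (g1,g2,g3) (a1,a2,a3,c1,c2,c3) 2 0 = c2"
  "albmat C (g1,g2,g3) (a1,a2,a3,c1,c2,c3) 2 1 = sm (inverse g3 * g2) (cj c1)"
  "albmat C (g1,g2,g3) (a1,a2,a3,c1,c2,c3) 2 2 = sm a3 one"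
  by (simp_all add: albmat_def)

lemma P1: "pl (mul d (cj c)) w = pl c d * tr w - pl (mul c (cj d)) w"
proof -
  have "mul d (cj c) = cj (mul c (cj d))" by (simp add: cj_mul)
  also have "\<dots> = sm (tr (mul c (cj d))) one - mul c (cj d)" by (simp add: cj_def')
  finally show ?thesis by (simp add: pl_diff_left pl_one_sm pl_as_tr[symmetric])
qed

lemma P2: "pl (mul (cj d) c) w = pl c d * tr w - pl (mul (cj c) d) w"
proof -
  have "mul (cj d) c = cj (mul (cj c) d)" by (simp add: cj_mul)
  also have "\<dots> = sm (tr (mul (cj c) d)) one - mul (cj c) d" by (simp add: cj_def')
  finally show ?thesis by (simp add: pl_diff_left pl_one_sm tr_mul)
qed

lemma pl_one_left: "pl one z = tr z" by (simp add: tr_def' pl_sym)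

lemmas pl_lin = one_mul mul_one pl_one_left pl_add_left pl_diff_left pl_sm_left pl_one_sm mul_sm_left mul_sm_right
   mul_sm_one_left mul_sm_one_right cm.scale_right_distrib

lemma four: "(4::'k) \<noteq> 0"
proof -
  have "(4::'k) = 2 * 2" by simp
  also have "\<dots> \<noteq> 0" using two by (simp only: mult_eq_0_iff) simp
  finally show ?thesis .
qed
lemma eight: "(8::'k) \<noteq> 0"
proof -
  have "(8::'k) = 2 * 4" by simp
  also have "\<dots> \<noteq> 0" using two four by (simp only: mult_eq_0_iff) simp
  finally show ?thesis .
qed

lemma sixteen: "(16::'k) \<noteq> 0"
proof -
  have "(16::'k) = 2 * 8" by simp
  also have "\<dots> \<noteq> 0" using two eight by (simp only: mult_eq_0_iff) simp
  finally show ?thesis .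
qed

lemma jmat00:
  assumes "inverse g3 * g2 = p1" "inverse g1 * g3 = p2" "inverse g2 * g1 = p3"
  shows "jmat C (albmat C (g1,g2,g3) (a1,a2,a3,c1,c2,c3)) (albmat C (g1,g2,g3) (b1,b2,b3,d1,d2,d3)) 0 0
   = sm (a1*b1 + inverse 2 * (p3 * pl c3 d3 + p2 * pl c2 d2)) one"
  unfolding jmat_def sum3 albmat_simps assms
  apply (simp only: mul_sm_one_left mul_sm_one_right mul_sm_left mul_sm_right)
  apply (rule eq_by_pl)
  apply (simp add: pl_lin P1[of d3 c3] P2[of d2 c2])
  using two four eight sixteen by (simp add: field_simps)

lemma jmat11:
  assumes "inverse g3 * g2 = p1" "inverse g1 * g3 = p2" "inverse g2 * g1 = p3"
  shows "jmat C (albmat C (g1,g2,g3) (a1,a2,a3,c1,c2,c3)) (albmat C (g1,g2,g3) (b1,b2,b3,d1,d2,d3)) 1 1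
   = sm (a2*b2 + inverse 2 * (p3 * pl c3 d3 + p1 * pl c1 d1)) one"
  unfolding jmat_def sum3 albmat_simps assms
  apply (simp only: mul_sm_one_left mul_sm_one_right mul_sm_left mul_sm_right)
  apply (rule eq_by_pl)
  apply (simp add: pl_lin P2[of d3 c3] P1[of d1 c1])
  using two four eight sixteen by (simp add: field_simps)

lemma jmat22:
  assumes "inverse g3 * g2 = p1" "inverse g1 * g3 = p2" "inverse g2 * g1 = p3"
  shows "jmat C (albmat C (g1,g2,g3) (a1,a2,a3,c1,c2,c3)) (albmat C (g1,g2,g3) (b1,b2,b3,d1,d2,d3)) 2 2
   = sm (a3*b3 + inverse 2 * (p2 * pl c2 d2 + p1 * pl c1 d1)) one"
  unfolding jmat_def sum3 albmat_simps assms
  apply (simp only: mul_sm_one_left mul_sm_one_right mul_sm_left mul_sm_right)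
  apply (rule eq_by_pl)
  apply (simp add: pl_lin P1[of d2 c2] P2[of d1 c1])
  using two four eight sixteen by (simp add: field_simps)

lemma jmat12:
  assumes "inverse g3 * g2 = p1" "inverse g1 * g3 = p2" "inverse g2 * g1 = p3"
  shows "jmat C (albmat C (g1,g2,g3) (a1,a2,a3,c1,c2,c3)) (albmat C (g1,g2,g3) (b1,b2,b3,d1,d2,d3)) 1 2
   = sm (inverse 2) (sm (a2+a3) d1 + sm (b2+b3) c1 + sm (p2*p3) (mul (cj c3) (cj d2) + mul (cj d3) (cj c2)))"
  unfolding jmat_def sum3 albmat_simps assms
  apply (simp only: mul_sm_one_left mul_sm_one_right mul_sm_left mul_sm_right)
  apply (rule eq_by_pl)
  apply (simp add: pl_lin )
  using two four eight sixteen by (simp add: field_simps)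

lemma jmat20:
  assumes "inverse g3 * g2 = p1" "inverse g1 * g3 = p2" "inverse g2 * g1 = p3"
  shows "jmat C (albmat C (g1,g2,g3) (a1,a2,a3,c1,c2,c3)) (albmat C (g1,g2,g3) (b1,b2,b3,d1,d2,d3)) 2 0
   = sm (inverse 2) (sm (a1+a3) d2 + sm (b1+b3) c2 + sm (p1*p3) (mul (cj c1) (cj d3) + mul (cj d1) (cj c3)))"
  unfolding jmat_def sum3 albmat_simps assms
  apply (simp only: mul_sm_one_left mul_sm_one_right mul_sm_left mul_sm_right)
  apply (rule eq_by_pl)
  apply (simp add: pl_lin )
  using two four eight sixteen by (simp add: field_simps)

lemma jmat01:
  assumes "inverse g3 * g2 = p1" "inverse g1 * g3 = p2" "inverse g2 * g1 = p3"
  shows "jmat C (albmat C (g1,g2,g3) (a1,a2,a3,c1,c2,c3)) (albmat C (g1,g2,g3) (b1,b2,b3,d1,d2,d3)) 0 1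
   = sm (inverse 2) (sm (a1+a2) d3 + sm (b1+b2) c3 + sm (p1*p2) (mul (cj c2) (cj d1) + mul (cj d2) (cj c1)))"
  unfolding jmat_def sum3 albmat_simps assms
  apply (simp only: mul_sm_one_left mul_sm_one_right mul_sm_left mul_sm_right)
  apply (rule eq_by_pl)
  apply (simp add: pl_lin )
  using two four eight sixteen by (simp add: field_simps)

lemma jprod_eq:
  assumes j: "is_jprod C (g1,g2,g3) x y z"
  shows "z = jp (inverse g3 * g2) (inverse g1 * g3) (inverse g2 * g1) x y"
proof -
  obtain a1 a2 a3 c1 c2 c3 where x: "x = (a1,a2,a3,c1,c2,c3)" by (cases x) auto
  obtain b1 b2 b3 d1 d2 d3 where y: "y = (b1,b2,b3,d1,d2,d3)" by (cases y) auto
  obtain z1 z2 z3 e1 e2 e3 where z: "z = (z1,z2,z3,e1,e2,e3)" by (cases z) auto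
  have J: "albmat C (g1,g2,g3) z i j = jmat C (albmat C (g1,g2,g3) x) (albmat C (g1,g2,g3) y) i j"
    if "i < 3" "j < 3" for i j using j that unfolding is_jprod_def by blast
  note R = jmat00[OF refl refl refl] jmat11[OF refl refl refl] jmat22[OF refl refl refl]
     jmat12[OF refl refl refl] jmat20[OF refl refl refl] jmat01[OF refl refl refl]
  have "sm z1 one = sm (a1*b1 + inverse 2 * (inverse g2 * g1 * pl c3 d3 + inverse g1 * g3 * pl c2 d2)) one"
    using J[of 0 0] unfolding x y z R albmat_simps by simp
  moreover have "sm z2 one = sm (a2*b2 + inverse 2 * (inverse g2 * g1 * pl c3 d3 + inverse g3 * g2 * pl c1 d1)) one"
    using J[of 1 1] unfolding x y z R albmat_simps by simp
  moreover have "sm z3 one = sm (a3*b3 + inverse 2 * (inverse g1 * g3 * pl c2 d2 + inverse g3 * g2 * pl c1 d1)) one"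
    using J[of 2 2] unfolding x y z R albmat_simps by simp
  moreover have "e1 = sm (inverse 2) (sm (a2+a3) d1 + sm (b2+b3) c1 + sm (inverse g1 * g3 * (inverse g2 * g1)) (mul (cj c3) (cj d2) + mul (cj d3) (cj c2)))"
    using J[of 1 2] unfolding x y z R albmat_simps by simp
  moreover have "e2 = sm (inverse 2) (sm (a1+a3) d2 + sm (b1+b3) c2 + sm (inverse g3 * g2 * (inverse g2 * g1)) (mul (cj c1) (cj d3) + mul (cj d1) (cj c3)))"
    using J[of 2 0] unfolding x y z R albmat_simps by simp
  moreover have "e3 = sm (inverse 2) (sm (a1+a2) d3 + sm (b1+b2) c3 + sm (inverse g3 * g2 * (inverse g1 * g3)) (mul (cj c2) (cj d1) + mul (cj d2) (cj c1)))"
    using J[of 0 1] unfolding x y z R albmat_simps by simp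
  ultimately show ?thesis unfolding x y z jp_simp sm_one_inj by simp
qed


lemma jp_one: "jp p1 p2 p3 alb_one x = x"
proof -
  obtain a1 a2 a3 c1 c2 c3 where x: "x = (a1,a2,a3,c1,c2,c3)" by (cases x) auto
  show ?thesis unfolding x alb_one_def jp_simp using two by simp
qed

lemma CH:
  assumes p: "p1*p2*p3 = 1"
  shows "jp p1 p2 p3 (adj p1 p2 p3 x) x = (Np p1 p2 p3 x, Np p1 p2 p3 x, Np p1 p2 p3 x, 0, 0, 0)"
proof -
  obtain a1 a2 a3 c1 c2 c3 where x: "x = (a1,a2,a3,c1,c2,c3)" by (cases x) auto
  have t1: "tr (mul c2 (mul c3 c1)) = tr (mul c3 (mul c1 c2))" by (rule tr_cyc)
  have t2: "tr (mul c1 (mul c2 c3)) = tr (mul c3 (mul c1 c2))" by (rule tr_cyc[symmetric])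
  have pp: "p1*(p2*(p3*X)) = X" for X using p by (simp add: mult.assoc[symmetric])
  have E1: "a1 * (a2*a3 - p1*nn c1) + inverse 2 * (p3 * pl (sm (p1*p2) (cj (mul c1 c2)) - sm a3 c3) c3
      + p2 * pl (sm (p1*p3) (cj (mul c3 c1)) - sm a2 c2) c2) = Np p1 p2 p3 x"
    unfolding x Np_simp using two
    by (simp add: pl_diff_left pl_sm_left K1 t1 t2 pl_self field_simps pp)
  have E2: "a2 * (a1*a3 - p2*nn c2) + inverse 2 * (p3 * pl (sm (p1*p2) (cj (mul c1 c2)) - sm a3 c3) c3
      + p1 * pl (sm (p2*p3) (cj (mul c2 c3)) - sm a1 c1) c1) = Np p1 p2 p3 x"
    unfolding x Np_simp using two
    by (simp add: pl_diff_left pl_sm_left K1 t1 t2 pl_self field_simps pp)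
  have E3: "a3 * (a1*a2 - p3*nn c3) + inverse 2 * (p2 * pl (sm (p1*p3) (cj (mul c3 c1)) - sm a2 c2) c2
      + p1 * pl (sm (p2*p3) (cj (mul c2 c3)) - sm a1 c1) c1) = Np p1 p2 p3 x"
    unfolding x Np_simp using two
    by (simp add: pl_diff_left pl_sm_left K1 t1 t2 pl_self field_simps pp)
  note cs = cj_diff cj_sm cj_cj cj_mul mul_diff_left mul_diff_right mul_sm_left mul_sm_right mul_mul_cj cj_mul_mul
  have F1: "sm (inverse 2) (sm ((a1*a2 - p3*nn c3) + (a1*a3 - p2*nn c2)) c1 + sm (a2+a3) (sm (p2*p3) (cj (mul c2 c3)) - sm a1 c1)
      + sm (p2*p3) (mul (cj (sm (p1*p2) (cj (mul c1 c2)) - sm a3 c3)) (cj c2) + mul (cj c3) (cj (sm (p1*p3) (cj (mul c3 c1)) - sm a2 c2)))) = 0"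
    apply (rule eq_by_pl)
    apply (simp add: cs pl_lin pl_diff_left)
    using two four eight sixteen apply (simp add: field_simps)
    using p by algebra
  have F2: "sm (inverse 2) (sm ((a2*a3 - p1*nn c1) + (a1*a2 - p3*nn c3)) c2 + sm (a1+a3) (sm (p1*p3) (cj (mul c3 c1)) - sm a2 c2)
      + sm (p1*p3) (mul (cj (sm (p2*p3) (cj (mul c2 c3)) - sm a1 c1)) (cj c3) + mul (cj c1) (cj (sm (p1*p2) (cj (mul c1 c2)) - sm a3 c3)))) = 0"
    apply (rule eq_by_pl)
    apply (simp add: cs pl_lin pl_diff_left)
    using two four eight sixteen apply (simp add: field_simps)
    using p by algebra
  have F3: "sm (inverse 2) (sm ((a2*a3 - p1*nn c1) + (a1*a3 - p2*nn c2)) c3 + sm (a1+a2) (sm (p1*p2) (cj (mul c1 c2)) - sm a3 c3)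
      + sm (p1*p2) (mul (cj (sm (p1*p3) (cj (mul c3 c1)) - sm a2 c2)) (cj c1) + mul (cj c2) (cj (sm (p2*p3) (cj (mul c2 c3)) - sm a1 c1)))) = 0"
    apply (rule eq_by_pl)
    apply (simp add: cs pl_lin pl_diff_left)
    using two four eight sixteen apply (simp add: field_simps)
    using p by algebra
  show ?thesis unfolding x adj_simp jp_simp
    using E1 E2 E3 F1 F2 F3 unfolding x by (simp add: algebra_simps)
qed


lemma jp_lin_left:
  "jp p1 p2 p3 (alb_add (alb_smul C k x) (alb_smul C l y)) z =
   alb_add (alb_smul C k (jp p1 p2 p3 x z)) (alb_smul C l (jp p1 p2 p3 y z))"
proof -
  obtain a1 a2 a3 c1 c2 c3 where x: "x = (a1,a2,a3,c1,c2,c3)" by (cases x) auto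
  obtain b1 b2 b3 d1 d2 d3 where y: "y = (b1,b2,b3,d1,d2,d3)" by (cases y) auto
  obtain e1 e2 e3 f1 f2 f3 where z: "z = (e1,e2,e3,f1,f2,f3)" by (cases z) auto
  note cs = cj_add cj_sm mul_add_left mul_add_right mul_sm_left mul_sm_right pl_lin pl_sm_left pl_add_left
  have o1: "sm (inverse 2) (sm (k * a2 + l * b2 + (k * a3 + l * b3)) f1 + sm (e2 + e3) (sm k c1 + sm l d1) +
      sm (p2 * p3) (mul (cj (sm k c3 + sm l d3)) (cj f2) + mul (cj f3) (cj (sm k c2 + sm l d2)))) =
    sm k (sm (inverse 2) (sm (a2 + a3) f1 + sm (e2 + e3) c1 + sm (p2 * p3) (mul (cj c3) (cj f2) + mul (cj f3) (cj c2)))) +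
    sm l (sm (inverse 2) (sm (b2 + b3) f1 + sm (e2 + e3) d1 + sm (p2 * p3) (mul (cj d3) (cj f2) + mul (cj f3) (cj d2))))"
    by (rule eq_by_pl) (simp add: cs algebra_simps)
  have o2: "sm (inverse 2) (sm (k * a1 + l * b1 + (k * a3 + l * b3)) f2 + sm (e1 + e3) (sm k c2 + sm l d2) +
      sm (p1 * p3) (mul (cj (sm k c1 + sm l d1)) (cj f3) + mul (cj f1) (cj (sm k c3 + sm l d3)))) =
    sm k (sm (inverse 2) (sm (a1 + a3) f2 + sm (e1 + e3) c2 + sm (p1 * p3) (mul (cj c1) (cj f3) + mul (cj f1) (cj c3)))) +
    sm l (sm (inverse 2) (sm (b1 + b3) f2 + sm (e1 + e3) d2 + sm (p1 * p3) (mul (cj d1) (cj f3) + mul (cj f1) (cj d3))))"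
    by (rule eq_by_pl) (simp add: cs algebra_simps)
  have o3: "sm (inverse 2) (sm (k * a1 + l * b1 + (k * a2 + l * b2)) f3 + sm (e1 + e2) (sm k c3 + sm l d3) +
      sm (p1 * p2) (mul (cj (sm k c2 + sm l d2)) (cj f1) + mul (cj f2) (cj (sm k c1 + sm l d1)))) =
    sm k (sm (inverse 2) (sm (a1 + a2) f3 + sm (e1 + e2) c3 + sm (p1 * p2) (mul (cj c2) (cj f1) + mul (cj f2) (cj c1)))) +
    sm l (sm (inverse 2) (sm (b1 + b2) f3 + sm (e1 + e2) d3 + sm (p1 * p2) (mul (cj d2) (cj f1) + mul (cj f2) (cj d1))))"
    by (rule eq_by_pl) (simp add: cs algebra_simps)
  show ?thesis unfolding x y z alb_smul_simp alb_add_simp jp_simp o1 o2 o3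
    by (simp add: pl_add_left pl_sm_left algebra_simps)
qed

definition trc :: "('k,'c) alb \<Rightarrow> 'k" where
  "trc x = (case x of (a1,a2,a3,c1,c2,c3) \<Rightarrow> a1 + a2 + a3)"

lemma half_sum: "sm (inverse 2) (A + A + sm k (M + M)) = A + sm k M"
proof -
  have "A + A + sm k (M + M) = sm 2 (A + sm k M)"
    by (simp only: sm_two cm.scale_right_distrib add_ac)
  then show ?thesis using two by simp
qed

lemma idem:
  assumes p: "p1*p2*p3 = 1" and fi: "jp p1 p2 p3 f f = f"
    and ns: "\<not> (\<exists>a. f = (a,a,a,0,0,0))"
  shows "(trc f - 1) * (trc f - 2) = 0" and "trc f = 1 \<Longrightarrow> adj p1 p2 p3 f = zalb"
proof -
  obtain a1 a2 a3 c1 c2 c3 where x: "f = (a1,a2,a3,c1,c2,c3)" by (cases f) auto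
  define \<tau> where "\<tau> = a1 + a2 + a3"
  define s where "s = a1*a2 + a1*a3 + a2*a3 - p1*nn c1 - p2*nn c2 - p3*nn c3"
  have eqs: "a1*a1 + inverse 2 * (p3 * pl c3 c3 + p2 * pl c2 c2) = a1"
     "a2*a2 + inverse 2 * (p3 * pl c3 c3 + p1 * pl c1 c1) = a2"
     "a3*a3 + inverse 2 * (p2 * pl c2 c2 + p1 * pl c1 c1) = a3"
     "sm (inverse 2) (sm (a2+a3) c1 + sm (a2+a3) c1 + sm (p2*p3) (mul (cj c3) (cj c2) + mul (cj c3) (cj c2))) = c1"
     "sm (inverse 2) (sm (a1+a3) c2 + sm (a1+a3) c2 + sm (p1*p3) (mul (cj c1) (cj c3) + mul (cj c1) (cj c3))) = c2"
     "sm (inverse 2) (sm (a1+a2) c3 + sm (a1+a2) c3 + sm (p1*p2) (mul (cj c2) (cj c1) + mul (cj c2) (cj c1))) = c3"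
    using fi unfolding x jp_simp by simp_all
  have ee: "a1*a1 + p3 * nn c3 + p2 * nn c2 = a1" "a2*a2 + p3 * nn c3 + p1 * nn c1 = a2"
    "a3*a3 + p2 * nn c2 + p1 * nn c1 = a3"
  proof -
    have i2: "inverse 2 * (p * (2 * n) + q * (2 * m)) = p * n + q * m" for p n q m :: 'k
      using two by (simp add: field_simps)
    show "a1*a1 + p3 * nn c3 + p2 * nn c2 = a1" using eqs(1) by (simp only: pl_self i2 add.assoc)
    show "a2*a2 + p3 * nn c3 + p1 * nn c1 = a2" using eqs(2) by (simp only: pl_self i2 add.assoc)
    show "a3*a3 + p2 * nn c2 + p1 * nn c1 = a3" using eqs(3) by (simp only: pl_self i2 add.assoc)
  qed
  have h2: "sm (inverse 2) (X + X) = X" for X using two by (simp add: sm_two[symmetric])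
  have oc: "sm (a2+a3) c1 + sm (p2*p3) (mul (cj c3) (cj c2)) = c1"
     "sm (a1+a3) c2 + sm (p1*p3) (mul (cj c1) (cj c3)) = c2"
     "sm (a1+a2) c3 + sm (p1*p2) (mul (cj c2) (cj c1)) = c3"
    using eqs(4-6) by (simp_all only: half_sum)
  have adjf: "adj p1 p2 p3 f = alb_add (alb_smul C (1 - \<tau>) f) (alb_smul C s alb_one)"
  proof -
    have "sm (p2*p3) (cj (mul c2 c3)) - sm a1 c1 = sm (1 - \<tau>) c1"
      using oc(1) unfolding \<tau>_def
      by (simp add: cj_mul) (metis (no_types, lifting) add_diff_cancel_left' cm.scale_left_diff_distrib
          cm.scale_left_distrib cm.scale_one diff_add_eq_diff_diff_swap diff_diff_eq2)
    moreover have "sm (p1*p3) (cj (mul c3 c1)) - sm a2 c2 = sm (1 - \<tau>) c2"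
      using oc(2) unfolding \<tau>_def
      by (simp add: cj_mul) (metis (no_types, lifting) add_diff_cancel_left' cm.scale_left_diff_distrib
          cm.scale_left_distrib cm.scale_one diff_add_eq_diff_diff_swap diff_diff_eq2)
    moreover have "sm (p1*p2) (cj (mul c1 c2)) - sm a3 c3 = sm (1 - \<tau>) c3"
      using oc(3) unfolding \<tau>_def
      by (simp add: cj_mul) (metis (no_types, lifting) add_diff_cancel_left' cm.scale_left_diff_distrib
          cm.scale_left_distrib cm.scale_one diff_add_eq_diff_diff_swap diff_diff_eq2)
    ultimately show ?thesis unfolding x adj_simp alb_smul_simp alb_add_simp alb_one_def \<tau>_def s_def
      using ee by (simp add: algebra_simps)
  qed
  have "jp p1 p2 p3 (adj p1 p2 p3 f) f = alb_add (alb_smul C (1 - \<tau>) f) (alb_smul C s f)"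
    unfolding adjf jp_lin_left fi jp_one ..
  then have J: "(Np p1 p2 p3 f, Np p1 p2 p3 f, Np p1 p2 p3 f, 0, 0, 0) = alb_add (alb_smul C (1 - \<tau>) f) (alb_smul C s f)"
    using CH[OF p] by simp
  define k where "k = 1 - \<tau> + s"
  have J2: "k * a1 = Np p1 p2 p3 f" "k * a2 = Np p1 p2 p3 f" "k * a3 = Np p1 p2 p3 f"
    "sm k c1 = 0" "sm k c2 = 0" "sm k c3 = 0"
    using J unfolding x alb_smul_simp alb_add_simp k_def
    by (simp_all add: algebra_simps cm.scale_left_distrib)
  have k0: "k = 0"
  proof (rule ccontr)
    assume k: "k \<noteq> 0"
    then have "c1 = 0" "c2 = 0" "c3 = 0" using J2(4-6) sm_eq_zero by auto
    moreover have "a2 = a1" "a3 = a1" using J2(1-3) k by (metis mult_left_cancel)+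
    ultimately have "f = (a1,a1,a1,0,0,0)" unfolding x by simp
    then show False using ns by blast
  qed
  have "\<tau> = (a1*a1 + p3*nn c3 + p2*nn c2) + (a2*a2 + p3*nn c3 + p1*nn c1) + (a3*a3 + p2*nn c2 + p1*nn c1)"
    unfolding \<tau>_def using ee by simp
  also have "\<dots> = \<tau> * \<tau> - 2 * s" unfolding \<tau>_def s_def by algebra
  finally have tt: "\<tau> = \<tau> * \<tau> - 2 * s" .
  have st: "s = \<tau> - 1" using k0 unfolding k_def by (simp add: algebra_simps)
  have "(\<tau> - 1) * (\<tau> - 2) = 0" using tt unfolding st by (simp add: algebra_simps)
  then show "(trc f - 1) * (trc f - 2) = 0" unfolding trc_def x \<tau>_def by simp
  assume "trc f = 1"
  then have "\<tau> = 1" unfolding trc_def x \<tau>_def by simp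
  then have "s = 0" using st by simp
  have "adj p1 p2 p3 f = alb_add (alb_smul C 0 f) (alb_smul C 0 alb_one)"
    using adjf \<open>\<tau> = 1\<close> \<open>s = 0\<close> by simp
  then show "adj p1 p2 p3 f = zalb" unfolding x
    by (simp add: alb_smul_simp alb_add_simp alb_one_def zalb_def)
qed

end



context oct begin

lemma strp_Mf:
  assumes "strp p1 p2 p3 h"
  shows "\<exists>\<nu>. \<nu> \<noteq> 0 \<and> (\<forall>a b c. Mf p1 p2 p3 (h a) (h b) (h c) = \<nu> * Mf p1 p2 p3 a b c) \<and>
    (\<forall>a. Np p1 p2 p3 (h a) = \<nu> * Np p1 p2 p3 a)"
proof -
  from assms obtain \<nu> where lin: "alb_linear C h" and nz: "\<nu> \<noteq> 0"
    and n: "\<And>a. Np p1 p2 p3 (h a) = \<nu> * Np p1 p2 p3 a"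
    unfolding strp_def by blast
  have add: "\<And>x y. h (alb_add x y) = alb_add (h x) (h y)" using lin unfolding alb_linear_def by blast
  have M: "Mf p1 p2 p3 (h a) (h b) (h c) = \<nu> * Mf p1 p2 p3 a b c" for a b c
    unfolding Mf_def add[symmetric] n by (simp add: algebra_simps)
  show ?thesis using nz M n by blast
qed

lemma strp_rk1:
  assumes "strp p1 p2 p3 h" "rk1 p1 p2 p3 u"
  shows "rk1 p1 p2 p3 (h u)"
proof -
  obtain \<nu> where M: "\<forall>a b c. Mf p1 p2 p3 (h a) (h b) (h c) = \<nu> * Mf p1 p2 p3 a b c"
    using strp_Mf[OF assms(1)] by blast
  have "surj h" using assms(1) unfolding strp_def by (simp add: bij_is_surj)
  show ?thesis unfolding rk1_def
  proof
    fix y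
    obtain z where z: "y = h z" using \<open>surj h\<close> unfolding surj_def by blast
    have "Mf p1 p2 p3 u u z = 0" using assms(2) unfolding rk1_def by blast
    then show "Mf p1 p2 p3 (h u) (h u) y = 0" unfolding z using M[rule_format, of u u z] by simp
  qed
qed

lemma Mf_e1:
  "Mf p1 p2 p3 (l,0,0,0,0,0) (b1,b2,b3,d1,d2,d3) (e1,e2,e3,f1,f2,f3) =
     l * (b2*e3 + b3*e2 - p1 * pl d1 f1)"
  unfolding Mf_def by (simp add: alb_add_simp Np_simp nn_add algebra_simps)

lemma rk1_adj:
  assumes p: "p1*p2*p3 = 1" and r: "rk1 p1 p2 p3 (a1,a2,a3,c1,c2,c3)"
  shows "a2*a3 - p1*nn c1 = 0" "a1*a3 - p2*nn c2 = 0" "a1*a2 - p3*nn c3 = 0"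
    "sm (p2*p3) (cj (mul c2 c3)) - sm a1 c1 = 0"
    "sm (p1*p3) (cj (mul c3 c1)) - sm a2 c2 = 0"
    "sm (p1*p2) (cj (mul c1 c2)) - sm a3 c3 = 0"
  using r unfolding rk1_iff[OF p] adj_simp zalb_def by simp_all


lemma pm_trick: "(B::'k) \<noteq> 0 \<Longrightarrow> a + B + D \<noteq> 0 \<or> a + - B + D \<noteq> 0"
proof (rule ccontr)
  assume B: "B \<noteq> 0" and "\<not> (a + B + D \<noteq> 0 \<or> a + - B + D \<noteq> 0)"
  then have "a + B + D = 0" "a + - B + D = 0" by auto
  then have "2 * B = 0" by (simp add: algebra_simps)
  then show False using B two by simp
qed

lemma exists_pl: "c \<noteq> 0 \<Longrightarrow> \<exists>w. pl w c \<noteq> 0"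
  using nondeg'[of c] pl_sym by metis

lemma step1a:
  assumes p: "p1*p2*p3 = 1"
    and nz: "a1 \<noteq> 0 \<or> c3 \<noteq> 0 \<or> a2 \<noteq> 0 \<or> c2 \<noteq> 0 \<or> a3 \<noteq> 0"
  shows "\<exists>h. strp p1 p2 p3 h \<and> fst (h (a1,a2,a3,c1,c2,c3)) \<noteq> 0"
proof -
  have pz: "p1 \<noteq> 0" "p2 \<noteq> 0" "p3 \<noteq> 0" using p by auto
  show ?thesis
  proof (cases "a1 \<noteq> 0")
    case True then show ?thesis using strp_id by (intro exI[of _ id]) simp
  next
    case a1: False
    show ?thesis
    proof (cases "c3 \<noteq> 0")
      case True
      then obtain w where w: "pl w c3 \<noteq> 0" using exists_pl by blast
      have "a1 + p3 * pl w c3 + p3 * a2 * nn w \<noteq> 0 \<or> a1 + - (p3 * pl w c3) + p3 * a2 * nn w \<noteq> 0"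
        by (rule pm_trick) (use w pz in simp)
      then show ?thesis
      proof
        assume "a1 + p3 * pl w c3 + p3 * a2 * nn w \<noteq> 0"
        then show ?thesis using E01_strp[OF p] by (intro exI[of _ "E01 p1 p2 p3 w"]) (simp add: E01_simp)
      next
        assume "a1 + - (p3 * pl w c3) + p3 * a2 * nn w \<noteq> 0"
        then show ?thesis using E01_strp[OF p] by (intro exI[of _ "E01 p1 p2 p3 (-w)"]) (simp add: E01_simp)
      qed
    next
      case c3: False
      show ?thesis
      proof (cases "a2 \<noteq> 0")
        case True
        then show ?thesis using E01_strp[OF p] a1 c3 pz
          by (intro exI[of _ "E01 p1 p2 p3 one"]) (simp add: E01_simp nn_one)
      next
        case a2: False
        show ?thesis
        proof (cases "c2 \<noteq> 0")
          case True
          then obtain w where w: "pl w c2 \<noteq> 0" using exists_pl by blast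
          have tw: "tr (mul (cj w) c2) = pl w c2" by (simp add: tr_mul)
          have "a1 + pl w c2 + p1 * p3 * a3 * nn (cj w) \<noteq> 0 \<or> a1 + - pl w c2 + p1 * p3 * a3 * nn (cj w) \<noteq> 0"
            by (rule pm_trick) (use w in simp)
          then show ?thesis
          proof
            assume "a1 + pl w c2 + p1 * p3 * a3 * nn (cj w) \<noteq> 0"
            then show ?thesis using E02_strp[OF p] by (intro exI[of _ "E02 p1 p2 p3 (cj w)"]) (simp add: E02_simp tw)
          next
            assume "a1 + - pl w c2 + p1 * p3 * a3 * nn (cj w) \<noteq> 0"
            then show ?thesis using E02_strp[OF p] by (intro exI[of _ "E02 p1 p2 p3 (- cj w)"]) (simp add: E02_simp tw)
          qed
        next
          case c2: False
          then have "a3 \<noteq> 0" using nz a1 a2 c3 by simp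
          then show ?thesis using E02_strp[OF p] a1 c2 pz
            by (intro exI[of _ "E02 p1 p2 p3 one"]) (simp add: E02_simp nn_one)
        qed
      qed
    qed
  qed
qed

lemma step1_nz:
  assumes p: "p1*p2*p3 = 1" and nz: "u \<noteq> zalb"
  shows "\<exists>h. strp p1 p2 p3 h \<and> fst (h u) \<noteq> 0"
proof -
  obtain a1 a2 a3 c1 c2 c3 where u: "u = (a1,a2,a3,c1,c2,c3)" by (cases u) auto
  have pz: "p1 \<noteq> 0" "p2 \<noteq> 0" "p3 \<noteq> 0" using p by auto
  show ?thesis
  proof (cases "a1 \<noteq> 0 \<or> c3 \<noteq> 0 \<or> a2 \<noteq> 0 \<or> c2 \<noteq> 0 \<or> a3 \<noteq> 0")
    case True then show ?thesis unfolding u by (rule step1a[OF p])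
  next
    case False
    then have z: "a1 = 0" "c3 = 0" "a2 = 0" "c2 = 0" "a3 = 0" by auto
    then have "c1 \<noteq> 0" using nz unfolding u zalb_def by auto
    then obtain w where w: "pl w c1 \<noteq> 0" using exists_pl by blast
    have e: "E12 p1 p2 p3 w u = (0, p1 * pl w c1, 0, c1, 0, 0)"
      unfolding u z by (simp add: E12_simp)
    obtain h where h: "strp p1 p2 p3 h" "fst (h (0, p1 * pl w c1, 0, c1, 0, 0)) \<noteq> 0"
      using step1a[OF p, of 0 0 "p1 * pl w c1" 0 0 c1] w pz by auto
    show ?thesis using h E12_strp[OF p, of w] e
      by (intro exI[of _ "h \<circ> E12 p1 p2 p3 w"]) (simp add: strp_comp)
  qed
qed


lemma step1b:
  assumes p: "p1*p2*p3 = 1" and r: "rk1 p1 p2 p3 u" and a1: "fst u \<noteq> 0"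
  shows "\<exists>h. strp p1 p2 p3 h \<and> h u = (fst u,0,0,0,0,0)"
proof -
  obtain a1 a2 a3 c1 c2 c3 where u: "u = (a1,a2,a3,c1,c2,c3)" by (cases u) auto
  have pz: "p1 \<noteq> 0" "p2 \<noteq> 0" "p3 \<noteq> 0" using p by auto
  have a: "a1 \<noteq> 0" using a1 u by simp
  define s where "s = cj (sm (- inverse (p2*p1*a1)) c3)"
  define b2 where "b2 = a2 + tr (mul s c3) + p2 * p1 * a1 * nn s"
  define d1 where "d1 = c1 + sm p2 (mul s (cj c2))"
  have k1: "p2 * p1 * a1 * (inverse p2 * inverse p1 * inverse a1) = 1" using pz a by (simp add: field_simps)
  have "sm (p2*p1*a1) (cj s) = - c3" using pz a k1 unfolding s_def by simp
  then have u1: "E10 p1 p2 p3 s u = (a1, b2, a3, d1, c2, 0)"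
    unfolding u E10_simp b2_def d1_def by simp
  define t where "t = sm (- inverse a1) c2"
  define b3 where "b3 = a3 + p2 * pl t c2 + p2 * a1 * nn t"
  have "c2 + sm a1 t = 0" using a unfolding t_def by simp
  then have u2: "E20 p1 p2 p3 t (a1, b2, a3, d1, c2, 0) = (a1, b2, b3, d1, 0, 0)"
    unfolding E20_simp b3_def by simp
  define h where "h = E20 p1 p2 p3 t \<circ> E10 p1 p2 p3 s"
  have sh: "strp p1 p2 p3 h" unfolding h_def by (intro strp_comp E20_strp E10_strp p)
  have hu: "h u = (a1, b2, b3, d1, 0, 0)" unfolding h_def using u1 u2 by simp
  have "rk1 p1 p2 p3 (a1, b2, b3, d1, 0, 0)" using strp_rk1[OF sh r] hu by simp
  note R = rk1_adj[OF p this]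
  have "b2 = 0" using R(3) a by simp
  moreover have "b3 = 0" using R(2) a by simp
  moreover have "d1 = 0" using R(4) a by (simp add: sm_eq_zero)
  ultimately show ?thesis using sh hu u by (intro exI[of _ h]) simp
qed

lemma step1:
  assumes p: "p1*p2*p3 = 1" and r: "rk1 p1 p2 p3 u" and nz: "u \<noteq> zalb"
  shows "\<exists>h l. strp p1 p2 p3 h \<and> h u = (l,0,0,0,0,0)"
proof -
  obtain h where h: "strp p1 p2 p3 h" "fst (h u) \<noteq> 0" using step1_nz[OF p nz] by blast
  obtain g where g: "strp p1 p2 p3 g" "g (h u) = (fst (h u),0,0,0,0,0)"
    using step1b[OF p strp_rk1[OF h(1) r] h(2)] by blast
  show ?thesis using g h by (intro exI[of _ "g \<circ> h"] exI[of _ "fst (h u)"]) (simp add: strp_comp)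
qed


definition fix1 :: "(('k,'c) alb \<Rightarrow> ('k,'c) alb) \<Rightarrow> bool" where
  "fix1 h \<longleftrightarrow> (\<forall>k. h (k,0,0,0,0,0) = (k,0,0,0,0,0))"
definition fix2 :: "(('k,'c) alb \<Rightarrow> ('k,'c) alb) \<Rightarrow> bool" where
  "fix2 h \<longleftrightarrow> (\<forall>k. h (0,k,0,0,0,0) = (0,k,0,0,0,0))"

lemma fix1_comp: "fix1 f \<Longrightarrow> fix1 g \<Longrightarrow> fix1 (f \<circ> g)" unfolding fix1_def by simp
lemma fix2_comp: "fix2 f \<Longrightarrow> fix2 g \<Longrightarrow> fix2 (f \<circ> g)" unfolding fix2_def by simp
lemma fix1_id: "fix1 id" unfolding fix1_def by simp
lemma fix1_E12: "fix1 (E12 p1 p2 p3 s)" unfolding fix1_def by (simp add: E12_simp)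
lemma fix1_E01: "fix1 (E01 p1 p2 p3 s)" unfolding fix1_def by (simp add: E01_simp)
lemma fix1_E21: "fix1 (E21 p1 p2 p3 s)" unfolding fix1_def by (simp add: E21_simp)
lemma fix1_E02: "fix1 (E02 p1 p2 p3 s)" unfolding fix1_def by (simp add: E02_simp)
lemma fix2_E02: "fix2 (E02 p1 p2 p3 s)" unfolding fix2_def by (simp add: E02_simp)
lemma fix2_E12: "fix2 (E12 p1 p2 p3 s)" unfolding fix2_def by (simp add: E12_simp)

lemma step2a:
  assumes p: "p1*p2*p3 = 1"
    and nz: "b2 \<noteq> 0 \<or> d1 \<noteq> 0 \<or> b3 \<noteq> 0"
  shows "\<exists>h. strp p1 p2 p3 h \<and> fix1 h \<and> fst (snd (h (b1,b2,b3,d1,d2,d3))) \<noteq> 0"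
proof -
  have pz: "p1 \<noteq> 0" "p2 \<noteq> 0" "p3 \<noteq> 0" using p by auto
  show ?thesis
  proof (cases "b2 \<noteq> 0")
    case True then show ?thesis using strp_id fix1_id by (intro exI[of _ id]) simp
  next
    case b2: False
    show ?thesis
    proof (cases "d1 \<noteq> 0")
      case True
      then obtain w where w: "pl w d1 \<noteq> 0" using exists_pl by blast
      have "b2 + p1 * pl w d1 + p1 * b3 * nn w \<noteq> 0 \<or> b2 + - (p1 * pl w d1) + p1 * b3 * nn w \<noteq> 0"
        by (rule pm_trick) (use w pz in simp)
      then show ?thesis
      proof
        assume "b2 + p1 * pl w d1 + p1 * b3 * nn w \<noteq> 0"
        then show ?thesis using E12_strp[OF p] fix1_E12
          by (intro exI[of _ "E12 p1 p2 p3 w"]) (simp add: E12_simp)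
      next
        assume "b2 + - (p1 * pl w d1) + p1 * b3 * nn w \<noteq> 0"
        then show ?thesis using E12_strp[OF p] fix1_E12
          by (intro exI[of _ "E12 p1 p2 p3 (-w)"]) (simp add: E12_simp)
      qed
    next
      case False
      then have "d1 = 0" "b3 \<noteq> 0" using nz b2 by auto
      then show ?thesis using E12_strp[OF p] fix1_E12 b2 pz
        by (intro exI[of _ "E12 p1 p2 p3 one"]) (simp add: E12_simp nn_one)
    qed
  qed
qed

lemma step2b:
  assumes p: "p1*p2*p3 = 1" and r: "rk1 p1 p2 p3 v" and b: "fst (snd v) \<noteq> 0"
  shows "\<exists>h. strp p1 p2 p3 h \<and> fix1 h \<and> h v = (0,fst (snd v),0,0,0,0)"
proof -
  obtain b1 b2 b3 d1 d2 d3 where v: "v = (b1,b2,b3,d1,d2,d3)" by (cases v) auto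
  have pz: "p1 \<noteq> 0" "p2 \<noteq> 0" "p3 \<noteq> 0" using p by auto
  have b2: "b2 \<noteq> 0" using b v by simp
  define s where "s = sm (- inverse b2) d3"
  define b1' where "b1' = b1 + p3 * pl s d3 + p3 * b2 * nn s"
  define d2' where "d2' = d2 + sm (p1*p3) (mul (cj d1) (cj s))"
  have "d3 + sm b2 s = 0" using b2 unfolding s_def by simp
  then have u1: "E01 p1 p2 p3 s v = (b1', b2, b3, d1, d2', 0)"
    unfolding v E01_simp b1'_def d2'_def by simp
  define t where "t = cj (sm (- inverse (p3*p2*b2)) d1)"
  define b3' where "b3' = b3 + tr (mul t d1) + p3 * p2 * b2 * nn t"
  have k1: "p3 * p2 * b2 * (inverse p3 * inverse p2 * inverse b2) = 1" using pz b2 by (simp add: field_simps)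
  have "d1 + sm (p3*p2*b2) (cj t) = 0" using pz b2 k1 unfolding t_def by simp
  then have u2: "E21 p1 p2 p3 t (b1', b2, b3, d1, d2', 0) = (b1', b2, b3', 0, d2', 0)"
    unfolding E21_simp b3'_def by simp
  define h where "h = E21 p1 p2 p3 t \<circ> E01 p1 p2 p3 s"
  have sh: "strp p1 p2 p3 h" unfolding h_def by (intro strp_comp E21_strp E01_strp p)
  have fh: "fix1 h" unfolding h_def by (intro fix1_comp fix1_E21 fix1_E01)
  have hu: "h v = (b1', b2, b3', 0, d2', 0)" unfolding h_def using u1 u2 by simp
  have "rk1 p1 p2 p3 (b1', b2, b3', 0, d2', 0)" using strp_rk1[OF sh r] hu by simp
  note R = rk1_adj[OF p this]
  have "b1' = 0" using R(3) b2 by simp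
  moreover have "b3' = 0" using R(1) b2 by simp
  moreover have "d2' = 0" using R(5) b2 by (simp add: sm_eq_zero)
  ultimately show ?thesis using sh fh hu v by (intro exI[of _ h]) simp
qed

lemma step3:
  assumes p: "p1*p2*p3 = 1" and r: "rk1 p1 p2 p3 w" and e: "fst (snd (snd w)) \<noteq> 0"
  shows "\<exists>h. strp p1 p2 p3 h \<and> fix1 h \<and> fix2 h \<and> h w = (0,0,fst (snd (snd w)),0,0,0)"
proof -
  obtain e1 e2 e3 f1 f2 f3 where w: "w = (e1,e2,e3,f1,f2,f3)" by (cases w) auto
  have pz: "p1 \<noteq> 0" "p2 \<noteq> 0" "p3 \<noteq> 0" using p by auto
  have e3: "e3 \<noteq> 0" using e w by simp
  define s where "s = cj (sm (- inverse (p1*p3*e3)) f2)"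
  define e1' where "e1' = e1 + tr (mul s f2) + p1 * p3 * e3 * nn s"
  define f3' where "f3' = f3 + sm p1 (mul s (cj f1))"
  have k1: "p1 * p3 * e3 * (inverse p1 * inverse p3 * inverse e3) = 1" using pz e3 by (simp add: field_simps)
  have "f2 + sm (p1*p3*e3) (cj s) = 0" using pz e3 k1 unfolding s_def by simp
  then have u1: "E02 p1 p2 p3 s w = (e1', e2, e3, f1, 0, f3')"
    unfolding w E02_simp e1'_def f3'_def by simp
  define t where "t = sm (- inverse e3) f1"
  define e2' where "e2' = e2 + p1 * pl t f1 + p1 * e3 * nn t"
  have "f1 + sm e3 t = 0" using e3 unfolding t_def by simp
  then have u2: "E12 p1 p2 p3 t (e1', e2, e3, f1, 0, f3') = (e1', e2', e3, 0, 0, f3')"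
    unfolding E12_simp e2'_def by simp
  define h where "h = E12 p1 p2 p3 t \<circ> E02 p1 p2 p3 s"
  have sh: "strp p1 p2 p3 h" unfolding h_def by (intro strp_comp E12_strp E02_strp p)
  have fh: "fix1 h" "fix2 h" unfolding h_def by (intro fix1_comp fix1_E12 fix1_E02, intro fix2_comp fix2_E12 fix2_E02)
  have hu: "h w = (e1', e2', e3, 0, 0, f3')" unfolding h_def using u1 u2 by simp
  have "rk1 p1 p2 p3 (e1', e2', e3, 0, 0, f3')" using strp_rk1[OF sh r] hu by simp
  note R = rk1_adj[OF p this]
  have "e1' = 0" using R(2) e3 by simp
  moreover have "e2' = 0" using R(1) e3 by simp
  moreover have "f3' = 0" using R(6) e3 by (simp add: sm_eq_zero)
  ultimately show ?thesis using sh fh hu w by (intro exI[of _ h]) simp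
qed


lemma step2:
  assumes p: "p1*p2*p3 = 1" and r: "rk1 p1 p2 p3 v" and m: "Mf p1 p2 p3 (l,0,0,0,0,0) v w \<noteq> 0"
  shows "\<exists>h \<mu>. strp p1 p2 p3 h \<and> fix1 h \<and> h v = (0,\<mu>,0,0,0,0)"
proof -
  obtain b1 b2 b3 d1 d2 d3 where v: "v = (b1,b2,b3,d1,d2,d3)" by (cases v) auto
  obtain e1 e2 e3 f1 f2 f3 where w: "w = (e1,e2,e3,f1,f2,f3)" by (cases w) auto
  have "b2 \<noteq> 0 \<or> d1 \<noteq> 0 \<or> b3 \<noteq> 0" using m unfolding v w Mf_e1 by auto
  then obtain h1 where h1: "strp p1 p2 p3 h1" "fix1 h1" "fst (snd (h1 v)) \<noteq> 0"
    using step2a[OF p] v by blast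
  obtain h2 where h2: "strp p1 p2 p3 h2" "fix1 h2" "h2 (h1 v) = (0,fst (snd (h1 v)),0,0,0,0)"
    using step2b[OF p strp_rk1[OF h1(1) r] h1(3)] by blast
  show ?thesis using h1 h2
    by (intro exI[of _ "h2 \<circ> h1"] exI[of _ "fst (snd (h1 v))"]) (simp add: strp_comp fix1_comp)
qed

lemma frame:
  assumes p: "p1*p2*p3 = 1" and r: "rk1 p1 p2 p3 f1" "rk1 p1 p2 p3 f2" "rk1 p1 p2 p3 f3"
    and nz: "f1 \<noteq> zalb" and m: "Mf p1 p2 p3 f1 f2 f3 \<noteq> 0"
  shows "\<exists>h l1 l2 l3. strp p1 p2 p3 h \<and> h f1 = (l1,0,0,0,0,0) \<and> h f2 = (0,l2,0,0,0,0)
     \<and> h f3 = (0,0,l3,0,0,0)"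
proof -
  obtain h1 l where h1: "strp p1 p2 p3 h1" "h1 f1 = (l,0,0,0,0,0)" using step1[OF p r(1) nz] by blast
  obtain \<nu>1 where n1: "\<nu>1 \<noteq> 0" "\<forall>a b c. Mf p1 p2 p3 (h1 a) (h1 b) (h1 c) = \<nu>1 * Mf p1 p2 p3 a b c"
    using strp_Mf[OF h1(1)] by blast
  have m1: "Mf p1 p2 p3 (l,0,0,0,0,0) (h1 f2) (h1 f3) \<noteq> 0"
    using n1 m h1(2) by (metis mult_eq_0_iff)
  obtain h2 \<mu> where h2: "strp p1 p2 p3 h2" "fix1 h2" "h2 (h1 f2) = (0,\<mu>,0,0,0,0)"
    using step2[OF p strp_rk1[OF h1(1) r(2)] m1] by blast
  obtain \<nu>2 where n2: "\<nu>2 \<noteq> 0" "\<forall>a b c. Mf p1 p2 p3 (h2 a) (h2 b) (h2 c) = \<nu>2 * Mf p1 p2 p3 a b c"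
    using strp_Mf[OF h2(1)] by blast
  have "h2 (l,0,0,0,0,0) = (l,0,0,0,0,0)" using h2(2) unfolding fix1_def by blast
  then have m2: "Mf p1 p2 p3 (l,0,0,0,0,0) (0,\<mu>,0,0,0,0) (h2 (h1 f3)) \<noteq> 0"
    using n2 m1 h2(3) by (metis mult_eq_0_iff)
  obtain e1 e2 e3 g1 g2 g3 where w: "h2 (h1 f3) = (e1,e2,e3,g1,g2,g3)" by (cases "h2 (h1 f3)") auto
  have "e3 \<noteq> 0" using m2 unfolding w Mf_e1 by simp
  then obtain h3 where h3: "strp p1 p2 p3 h3" "fix1 h3" "fix2 h3" "h3 (h2 (h1 f3)) = (0,0,e3,0,0,0)"
    using step3[OF p strp_rk1[OF h2(1) strp_rk1[OF h1(1) r(3)]]] w by fastforce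
  have a: "h3 (l,0,0,0,0,0) = (l,0,0,0,0,0)" using h3(2) unfolding fix1_def by blast
  have b: "h3 (0,\<mu>,0,0,0,0) = (0,\<mu>,0,0,0,0)" using h3(3) unfolding fix2_def by blast
  show ?thesis
    using h1 h2 h3 a b \<open>h2 (l,0,0,0,0,0) = (l,0,0,0,0,0)\<close>
    by (intro exI[of _ "h3 \<circ> h2 \<circ> h1"] exI[of _ l] exI[of _ \<mu>] exI[of _ e3]) (simp add: strp_comp)
qed

end



context oct begin

lemma norm_eq: "alb_norm C (g1,g2,g3) x = Np (inverse g3 * g2) (inverse g1 * g3) (inverse g2 * g1) x"
  by (cases x) (simp add: alb_norm_def Np_simp algebra_simps)

lemma norm3_eq: "alb_norm3 C (g1,g2,g3) a b c = Mf (inverse g3 * g2) (inverse g1 * g3) (inverse g2 * g1) a b c"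
  unfolding alb_norm3_def Mf_def norm_eq ..

lemma trc_add: "trc (alb_add x y) = trc x + trc y"
  by (cases x, cases y) (simp add: trc_def alb_add_simp)

lemma trc_smul: "trc (alb_smul C k x) = k * trc x"
  by (cases x) (simp add: trc_def alb_smul_simp algebra_simps)

lemma Np_one: "p1*p2*p3 = 1 \<Longrightarrow> Np p1 p2 p3 alb_one = 1"
  by (simp add: alb_one_def Np_simp)

lemma inv_linear:
  assumes "alb_linear C h" "bij h"
  shows "alb_linear C (inv h)"
proof -
  have hi: "h (inv h x) = x" for x using assms(2) by (simp add: bij_is_surj surj_f_inv_f)
  have ih: "inv h (h x) = x" for x using assms(2) by (simp add: bij_is_inj)
  have add: "h (alb_add x y) = alb_add (h x) (h y)" for x y using assms(1) unfolding alb_linear_def by blast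
  have sm: "h (alb_smul C k x) = alb_smul C k (h x)" for k x using assms(1) unfolding alb_linear_def by blast
  show ?thesis unfolding alb_linear_def
  proof (intro conjI allI)
    fix x y
    have "inv h (alb_add x y) = inv h (h (alb_add (inv h x) (inv h y)))" by (simp add: add hi)
    then show "inv h (alb_add x y) = alb_add (inv h x) (inv h y)" by (simp add: ih)
  next
    fix k x
    have "inv h (alb_smul C k x) = inv h (h (alb_smul C k (inv h x)))" by (simp add: sm hi)
    then show "inv h (alb_smul C k x) = alb_smul C k (inv h x)" by (simp add: ih)
  qed
qed

end


theorem mainTheorem4:
  fixes C :: "('k::field, 'c::ab_group_add) kalg"
    and g1 g2 g3 :: 'k
    and L2 :: "('k, 'c) alb set"
  assumes "(2::'k) \<noteq> 0" and "(3::'k) \<noteq> 0"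
    and "octonion_algebra C"
    and "g1 \<noteq> 0" and "g2 \<noteq> 0" and "g3 \<noteq> 0"
    and "split_cubic_etale_sub C (g1, g2, g3) L2"
  shows "\<exists>g. in_Str C (g1, g2, g3) g \<and> g ` diag_sub = L2"
proof -
  interpret oct C using assms(1,3) by unfold_locales
  note three = assms(2)
  define p1 where "p1 = inverse g3 * g2"
  define p2 where "p2 = inverse g1 * g3"
  define p3 where "p3 = inverse g2 * g1"
  have p: "p1*p2*p3 = 1" unfolding p1_def p2_def p3_def using assms(4-6) by (simp add: field_simps)
  have NE: "alb_norm C (g1,g2,g3) x = Np p1 p2 p3 x" for x unfolding p1_def p2_def p3_def by (rule norm_eq)
  have ME: "alb_norm3 C (g1,g2,g3) a b c = Mf p1 p2 p3 a b c" for a b c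
    unfolding p1_def p2_def p3_def by (rule norm3_eq)
  have JE: "is_jprod C (g1,g2,g3) x y z \<Longrightarrow> z = jp p1 p2 p3 x y" for x y z
    unfolding p1_def p2_def p3_def by (rule jprod_eq)
  from assms(7) have one_in: "alb_one \<in> L2"
    and "\<exists>\<phi> :: 'k \<times> 'k \<times> 'k \<Rightarrow> ('k, 'c) alb.
        bij_betw \<phi> UNIV L2 \<and>
        (\<forall>a1 a2 a3 b1 b2 b3. \<phi> (a1 + b1, a2 + b2, a3 + b3) = alb_add (\<phi> (a1, a2, a3)) (\<phi> (b1, b2, b3))) \<and>
        (\<forall>s a1 a2 a3. \<phi> (s * a1, s * a2, s * a3) = alb_smul C s (\<phi> (a1, a2, a3))) \<and>
        (\<forall>a1 a2 a3 b1 b2 b3. is_jprod C (g1,g2,g3) (\<phi> (a1, a2, a3)) (\<phi> (b1, b2, b3))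
                                 (\<phi> (a1 * b1, a2 * b2, a3 * b3)))"
    unfolding split_cubic_etale_sub_def by blast+
  then obtain \<phi> :: "'k \<times> 'k \<times> 'k \<Rightarrow> ('k, 'c) alb" where
    bb: "bij_betw \<phi> UNIV L2" and
    padd: "\<And>a1 a2 a3 b1 b2 b3. \<phi> (a1 + b1, a2 + b2, a3 + b3) = alb_add (\<phi> (a1, a2, a3)) (\<phi> (b1, b2, b3))" and
    psm: "\<And>s a1 a2 a3. \<phi> (s * a1, s * a2, s * a3) = alb_smul C s (\<phi> (a1, a2, a3))" and
    pmul: "\<And>a1 a2 a3 b1 b2 b3. is_jprod C (g1,g2,g3) (\<phi> (a1, a2, a3)) (\<phi> (b1, b2, b3))
                                 (\<phi> (a1 * b1, a2 * b2, a3 * b3))"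
    by blast
  have inj: "\<phi> a = \<phi> b \<Longrightarrow> a = b" for a b using bb unfolding bij_betw_def inj_on_def by blast
  have L2im: "L2 = range \<phi>" using bb unfolding bij_betw_def by simp
  have pj: "\<phi> (a1 * b1, a2 * b2, a3 * b3) = jp p1 p2 p3 (\<phi> (a1, a2, a3)) (\<phi> (b1, b2, b3))" for a1 a2 a3 b1 b2 b3
    using JE[OF pmul] .
  obtain t where t: "alb_one = \<phi> t" using one_in L2im by blast
  obtain v1 v2 v3 where tv: "t = (v1,v2,v3)" by (cases t) auto
  have v: "\<phi> (v1,v2,v3) = alb_one" using t tv by simp
  have "\<phi> (v1 * 1, v2 * 1, v3 * 1) = \<phi> (1,1,1)"
    unfolding pj v jp_one ..
  then have "(v1,v2,v3) = (1,1,1)" using inj by (simp only: mult_1_right)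
  then have phi1: "\<phi> (1,1,1) = alb_one" using v by simp
  define f1 where "f1 = \<phi> (1,0,0)"
  define f2 where "f2 = \<phi> (0,1,0)"
  define f3 where "f3 = \<phi> (0,0,1)"
  have idf: "jp p1 p2 p3 f1 f1 = f1" "jp p1 p2 p3 f2 f2 = f2" "jp p1 p2 p3 f3 f3 = f3"
    unfolding f1_def f2_def f3_def using pj[of 1 1 0 0 0 0] pj[of 0 0 1 1 0 0] pj[of 0 0 0 0 1 1] by simp_all
  have decomp: "\<phi> (x,y,z) = alb_add (alb_add (alb_smul C x f1) (alb_smul C y f2)) (alb_smul C z f3)" for x y z
  proof -
    have e1: "\<phi> (x+0, 0+y, 0+0) = alb_add (\<phi> (x,0,0)) (\<phi> (0,y,0))" by (rule padd)
    have e2: "\<phi> (x+0, y+0, 0+z) = alb_add (\<phi> (x,y,0)) (\<phi> (0,0,z))" by (rule padd)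
    have "\<phi> (x,y,z) = alb_add (alb_add (\<phi> (x,0,0)) (\<phi> (0,y,0))) (\<phi> (0,0,z))"
      using e1 e2 by simp
    moreover have "\<phi> (x*1,x*0,x*0) = alb_smul C x f1" unfolding f1_def by (rule psm)
    moreover have "\<phi> (y*0,y*1,y*0) = alb_smul C y f2" unfolding f2_def by (rule psm)
    moreover have "\<phi> (z*0,z*0,z*1) = alb_smul C z f3" unfolding f3_def by (rule psm)
    ultimately show ?thesis by simp
  qed
  have sum1: "alb_add (alb_add f1 f2) f3 = alb_one"
    using decomp[of 1 1 1] phi1 by (cases f1, cases f2, cases f3) (simp add: alb_smul_simp)
  have ns: "\<not> (\<exists>a. \<phi> e = (a,a,a,0,0,0))" if ne: "\<And>a. e \<noteq> (a,a,a)" for e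
  proof
    assume "\<exists>a. \<phi> e = (a,a,a,0,0,0)"
    then obtain a where a: "\<phi> e = (a,a,a,0,0,0)" by blast
    have "\<phi> (a*1,a*1,a*1) = alb_smul C a (\<phi> (1,1,1))" by (rule psm)
    then have "\<phi> (a,a,a) = \<phi> e" unfolding phi1 a by (simp add: alb_one_def alb_smul_simp)
    then show False using inj ne by metis
  qed
  have phi0: "\<phi> (0,0,0) = zalb"
  proof -
    have "\<phi> (0*1,0*0,0*0) = alb_smul C 0 (\<phi> (1,0,0))" by (rule psm)
    then show ?thesis by (cases "\<phi> (1,0,0)") (simp add: alb_smul_simp zalb_def)
  qed
  have fnz: "f1 \<noteq> zalb" "f2 \<noteq> zalb" "f3 \<noteq> zalb"
    unfolding f1_def f2_def f3_def phi0[symmetric] using inj by (metis prod.inject zero_neq_one)+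
  have ns1: "\<not> (\<exists>a. f1 = (a,a,a,0,0,0))" unfolding f1_def by (rule ns) auto
  have ns2: "\<not> (\<exists>a. f2 = (a,a,a,0,0,0))" unfolding f2_def by (rule ns) auto
  have ns3: "\<not> (\<exists>a. f3 = (a,a,a,0,0,0))" unfolding f3_def by (rule ns) auto
  have T: "trc f1 + trc f2 + trc f3 = 3"
  proof -
    have "trc (alb_add (alb_add f1 f2) f3) = 3" unfolding sum1 by (simp add: trc_def alb_one_def)
    then show ?thesis by (simp add: trc_add)
  qed
  have q1: "(trc f1 - 1) * (trc f1 - 2) = 0" by (rule idem(1)[OF p idf(1) ns1])
  have q2: "(trc f2 - 1) * (trc f2 - 2) = 0" by (rule idem(1)[OF p idf(2) ns2])
  have q3: "(trc f3 - 1) * (trc f3 - 2) = 0" by (rule idem(1)[OF p idf(3) ns3])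
  have n4: "(4::'k) \<noteq> 3"
  proof
    assume "(4::'k) = 3" then have "(4::'k) - 3 = 0" by simp
    then show False by simp
  qed
  have n5: "(5::'k) \<noteq> 3"
  proof
    assume "(5::'k) = 3" then have "(5::'k) - 3 = 0" by simp
    then show False using two by simp
  qed
  have n6: "(6::'k) \<noteq> 3"
  proof
    assume "(6::'k) = 3" then have "(6::'k) - 3 = 0" by simp
    then show False using three by simp
  qed
  have o1: "trc f1 = 1 \<or> trc f1 = 2" "trc f2 = 1 \<or> trc f2 = 2" "trc f3 = 1 \<or> trc f3 = 2"
    using q1 q2 q3 by auto
  have t1: "trc f1 = 1" "trc f2 = 1" "trc f3 = 1"
    using o1 T n4 n5 n6 by auto
  have az: "adj p1 p2 p3 f1 = zalb" "adj p1 p2 p3 f2 = zalb" "adj p1 p2 p3 f3 = zalb"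
    using idem(2)[OF p idf(1) ns1 t1(1)] idem(2)[OF p idf(2) ns2 t1(2)] idem(2)[OF p idf(3) ns3 t1(3)] by auto
  have rk: "rk1 p1 p2 p3 f1" "rk1 p1 p2 p3 f2" "rk1 p1 p2 p3 f3" using az rk1_iff[OF p] by auto
  have N0: "Np p1 p2 p3 f = 0" if "adj p1 p2 p3 f = zalb" for f
  proof -
    have "3 * Np p1 p2 p3 f = 0" using Qf_self[OF p, of f] adj_zero_Qf[OF that] by simp
    then show ?thesis using three by simp
  qed
  have N2: "Np p1 p2 p3 (alb_add f g) = 0" if "adj p1 p2 p3 f = zalb" "adj p1 p2 p3 g = zalb" for f g
    unfolding Np_add[OF p] using N0 adj_zero_Qf that by simp
  have M1: "Mf p1 p2 p3 f1 f2 f3 = 1"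
    unfolding Mf_def sum1 Np_one[OF p] using N0 N2 az by simp
  obtain h l1 l2 l3 where h: "strp p1 p2 p3 h" "h f1 = (l1,0,0,0,0,0)" "h f2 = (0,l2,0,0,0,0)"
     "h f3 = (0,0,l3,0,0,0)"
    using frame[OF p rk fnz(1)] M1 by fastforce
  obtain \<nu> where hlin: "alb_linear C h" and hbij: "bij h" and nu: "\<nu> \<noteq> 0"
    and hN: "\<And>a. Np p1 p2 p3 (h a) = \<nu> * Np p1 p2 p3 a"
    using h(1) unfolding strp_def by blast
  have hadd: "h (alb_add x y) = alb_add (h x) (h y)" for x y using hlin unfolding alb_linear_def by blast
  have hM: "Mf p1 p2 p3 (h a) (h b) (h c) = \<nu> * Mf p1 p2 p3 a b c" for a b c
    unfolding Mf_def hadd[symmetric] hN by (simp add: algebra_simps)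
  have hsm: "h (alb_smul C k x) = alb_smul C k (h x)" for k x using hlin unfolding alb_linear_def by blast
  have hz: "h zalb = zalb"
  proof -
    have "h (alb_smul C 0 zalb) = alb_smul C 0 (h zalb)" by (rule hsm)
    then show ?thesis by (cases "h zalb") (simp add: zalb_def alb_smul_simp)
  qed
  have hinj: "inj h" using hbij by (simp add: bij_is_inj)
  have lnz: "l1 \<noteq> 0" "l2 \<noteq> 0" "l3 \<noteq> 0"
  proof -
    show "l1 \<noteq> 0" proof assume "l1 = 0" then have "h f1 = h zalb" using h(2) hz by (simp add: zalb_def)
      then show False using hinj fnz(1) by (simp add: inj_eq) qed
    show "l2 \<noteq> 0" proof assume "l2 = 0" then have "h f2 = h zalb" using h(3) hz by (simp add: zalb_def)
      then show False using hinj fnz(2) by (simp add: inj_eq) qed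
    show "l3 \<noteq> 0" proof assume "l3 = 0" then have "h f3 = h zalb" using h(4) hz by (simp add: zalb_def)
      then show False using hinj fnz(3) by (simp add: inj_eq) qed
  qed
  have hphi: "h (\<phi> (x,y,z)) = (x*l1, y*l2, z*l3, 0, 0, 0)" for x y z
    unfolding decomp hadd hsm h(2-4) by (simp add: alb_smul_simp alb_add_simp)
  define g where "g = inv h"
  have gh: "g (h x) = x" for x unfolding g_def using hinj by simp
  have hg: "h (g x) = x" for x unfolding g_def using hbij by (simp add: bij_is_surj surj_f_inv_f)
  have instr: "in_Str C (g1,g2,g3) g"
    unfolding in_Str_def
  proof (intro conjI exI[of _ "inverse \<nu>"])
    show "alb_linear C g" unfolding g_def by (rule inv_linear[OF hlin hbij])
    show "bij g" unfolding g_def by (rule bij_imp_bij_inv[OF hbij])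
    show "inverse \<nu> \<noteq> 0" using nu by simp
    show "\<forall>a. alb_norm C (g1, g2, g3) (g a) = inverse \<nu> * alb_norm C (g1, g2, g3) a"
    proof
      fix a
      have "Np p1 p2 p3 a = \<nu> * Np p1 p2 p3 (g a)" using hN[of "g a"] hg by simp
      then show "alb_norm C (g1, g2, g3) (g a) = inverse \<nu> * alb_norm C (g1, g2, g3) a"
        unfolding NE using nu by simp
    qed
    show "\<forall>a b c. alb_norm3 C (g1, g2, g3) (g a) (g b) (g c) = inverse \<nu> * alb_norm3 C (g1, g2, g3) a b c"
    proof (intro allI)
      fix a b c
      have "Mf p1 p2 p3 a b c = \<nu> * Mf p1 p2 p3 (g a) (g b) (g c)" using hM[of "g a" "g b" "g c"] hg by simp
      then show "alb_norm3 C (g1, g2, g3) (g a) (g b) (g c) = inverse \<nu> * alb_norm3 C (g1, g2, g3) a b c"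
        unfolding ME using nu by simp
    qed
  qed
  have img: "g ` diag_sub = L2"
  proof
    show "g ` diag_sub \<subseteq> L2"
    proof
      fix x assume "x \<in> g ` diag_sub"
      then obtain a1 a2 a3 where x: "x = g (a1,a2,a3,0,0,0)" unfolding diag_sub_def by blast
      have "(a1,a2,a3,0,0,0) = h (\<phi> (a1 / l1, a2 / l2, a3 / l3))" unfolding hphi using lnz by simp
      then have "x = \<phi> (a1 / l1, a2 / l2, a3 / l3)" unfolding x using gh by metis
      then show "x \<in> L2" unfolding L2im by simp
    qed
  next
    show "L2 \<subseteq> g ` diag_sub"
    proof
      fix y assume "y \<in> L2"
      then obtain t where t: "y = \<phi> t" unfolding L2im by blast
      obtain t1 t2 t3 where tt: "t = (t1,t2,t3)" by (cases t) auto
      have "h y = (t1*l1, t2*l2, t3*l3, 0, 0, 0)" unfolding t tt hphi ..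
      then have "y = g (t1*l1, t2*l2, t3*l3, 0, 0, 0)" using gh by metis
      then show "y \<in> g ` diag_sub" unfolding diag_sub_def by blast
    qed
  qed
  show ?thesis using instr img by blast
qed


end
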